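(* Let $l,a,s,t\in\mathbb N$, let $L_{\sigma\tau}(\mathbf r)$, $\sigma\in[s]$, $\tau\in[t]$, be $\mathbb Z$-linear forms in independent variables $r_1,\dots,r_{l+a}$, and let $X_1,\dots,X_{l+a},Y_1,\dots,Y_s$ be independent variables. For $\mathbf r\in\mathbb N_0^{l+a}$ set $\mathbf X^{\mathbf r}=\prod_{\rho\in[l+a]}X_\rho^{r_\rho}$ and $m_{\mathbf r}(\mathbf Y)=\prod_{\sigma\in[s]}Y_\sigma^{\min_{\tau\in[t]}\{L_{\sigma\tau}(\mathbf r)\}}$. Define $$Z^\circ(\mathbf X,\mathbf Y)=\sum_{\mathbf r\in\mathbb N^{l}\times(\mathbb N_0^a\setminus\mathbb N^a)}\mathbf X^{\mathbf r}m_{\mathbf r}(\mathbf Y),\qquad Z(\mathbf X,\mathbf Y)=\sum_{\mathbf r\in\mathbb N_0^{l}\times(\mathbb N_0^a\setminus\mathbb N^a)}\mathbf X^{\mathbf r}m_{\mathbf r}(\mathbf Y).$$ Then, as rational functions, $$Z^\circ(\mathbf X^{-1},\mathbf Y^{-1})=(-1)^{l+a-1}Z(\mathbf X,\mathbf Y).$$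
   Context: $\mathbb N=\{1,2,\dots\}$, $\mathbb N_0=\mathbb N\cup\{0\}$; in $\mathbb N^l\times(\mathbb N_0^a\setminus\mathbb N^a)$ the first $l$ coordinates are $r_1,\dots,r_l$ and the last $a$ coordinates are $r_{l+1},\dots,r_{l+a}$. *)

theory Defs
  imports "HOL-Analysis.Analysis"
begin

text \<open>Variables r_1..r_{l+a} are indexed 0..l+a-1 (first l coordinates: indices < l).
  An exponent vector r is a function nat => nat vanishing outside {0..<l+a}.\<close>

definition linform :: "(nat \<Rightarrow> nat \<Rightarrow> nat \<Rightarrow> int) \<Rightarrow> nat \<Rightarrow> nat \<Rightarrow> nat \<Rightarrow> (nat \<Rightarrow> nat) \<Rightarrow> int" where
  "linform c n \<sigma> \<tau> r = (\<Sum>\<rho><n. c \<sigma> \<tau> \<rho> * int (r \<rho>))"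

definition Zterm :: "(nat \<Rightarrow> nat \<Rightarrow> nat \<Rightarrow> int) \<Rightarrow> nat \<Rightarrow> nat \<Rightarrow> nat \<Rightarrow>
    (nat \<Rightarrow> complex) \<Rightarrow> (nat \<Rightarrow> complex) \<Rightarrow> (nat \<Rightarrow> nat) \<Rightarrow> complex" where
  "Zterm c n s t X Y r =
     (\<Prod>\<rho><n. X \<rho> ^ r \<rho>) *
     (\<Prod>\<sigma><s. Y \<sigma> powi (Min ((\<lambda>\<tau>. linform c n \<sigma> \<tau> r) ` {..<t})))"

definition cone_circ :: "nat \<Rightarrow> nat \<Rightarrow> (nat \<Rightarrow> nat) set" where
  "cone_circ l a = {r. (\<forall>\<rho>. l + a \<le> \<rho> \<longrightarrow> r \<rho> = 0) \<and> (\<forall>\<rho><l. 1 \<le> r \<rho>)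
                       \<and> (\<exists>\<rho>. l \<le> \<rho> \<and> \<rho> < l + a \<and> r \<rho> = 0)}"

definition cone :: "nat \<Rightarrow> nat \<Rightarrow> (nat \<Rightarrow> nat) set" where
  "cone l a = {r. (\<forall>\<rho>. l + a \<le> \<rho> \<longrightarrow> r \<rho> = 0)
                  \<and> (\<exists>\<rho>. l \<le> \<rho> \<and> \<rho> < l + a \<and> r \<rho> = 0)}"

definition is_mpoly :: "nat \<Rightarrow> ((nat \<Rightarrow> nat) \<Rightarrow> complex) \<Rightarrow> bool" where
  "is_mpoly n p \<longleftrightarrow> finite {e. p e \<noteq> 0} \<and> (\<forall>e. p e \<noteq> 0 \<longrightarrow> (\<forall>i. n \<le> i \<longrightarrow> e i = 0))"

definition mpoly_eval :: "nat \<Rightarrow> ((nat \<Rightarrow> nat) \<Rightarrow> complex) \<Rightarrow> (nat \<Rightarrow> complex) \<Rightarrow> complex" where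
  "mpoly_eval n p z = (\<Sum>e\<in>{e. p e \<noteq> 0}. p e * (\<Prod>i<n. z i ^ e i))"

definition joinv :: "nat \<Rightarrow> (nat \<Rightarrow> complex) \<Rightarrow> (nat \<Rightarrow> complex) \<Rightarrow> nat \<Rightarrow> complex" where
  "joinv n X Y i = (if i < n then X i else Y (i - n))"

end

theory Submission
  imports Defs "HOL-Computational_Algebra.Polynomial"
begin

lemma geom_has_sum:
  fixes z :: "'a::{real_normed_field,banach}"
  assumes "norm z < 1"
  shows "((\<lambda>n. z ^ n) has_sum (1 / (1 - z))) UNIV"
  by (rule norm_summable_imp_has_sum)
     (use assms in \<open>auto simp: norm_power intro!: summable_geometric geometric_sums\<close>)

lemma geom_prod_has_sum:
  fixes w :: "nat \<Rightarrow> complex"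
  assumes J: "finite J" and w: "\<And>k. k\<in>J \<Longrightarrow> norm (w k) < 1"
  shows "((\<lambda>m. \<Prod>k\<in>J. w k ^ m k) has_sum (\<Prod>k\<in>J. 1/(1 - w k))) (PiE J (\<lambda>_. UNIV))"
proof -
  have abs: "(\<lambda>m. norm (\<Prod>k\<in>J. w k ^ m k)) summable_on (PiE J (\<lambda>_. UNIV))"
  proof (subst abs_summable_iff_bdd_above, rule bdd_aboveI2)
    fix F :: "(nat \<Rightarrow> nat) set" assume F: "F \<in> {F. F \<subseteq> PiE J (\<lambda>_. UNIV) \<and> finite F}"
    define N where "N = Max ((\<lambda>(m,k). m k) ` (F \<times> J))"
    have fin: "finite (F \<times> J)" using F J by auto
    have sub: "F \<subseteq> PiE J (\<lambda>_. {..N})"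
    proof
      fix m assume m: "m \<in> F"
      have "m k \<le> N" if "k \<in> J" for k
        unfolding N_def using m that fin by (intro Max_ge) force+
      then show "m \<in> PiE J (\<lambda>_. {..N})" using m F by (auto simp: PiE_def Pi_def)
    qed
    have "(\<Sum>m\<in>F. norm (\<Prod>k\<in>J. w k ^ m k)) = (\<Sum>m\<in>F. \<Prod>k\<in>J. norm (w k) ^ m k)"
      by (intro sum.cong refl) (simp add: prod_norm[symmetric] norm_power)
    also have "\<dots> \<le> (\<Sum>m\<in>PiE J (\<lambda>_. {..N}). \<Prod>k\<in>J. norm (w k) ^ m k)"
      by (rule sum_mono2) (use sub J in \<open>auto simp: finite_PiE intro: prod_nonneg\<close>)
    also have "\<dots> = (\<Prod>k\<in>J. \<Sum>j\<le>N. norm (w k) ^ j)"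
      by (rule prod_sum_PiE[symmetric]) (use J in auto)
    also have "\<dots> \<le> (\<Prod>k\<in>J. 1 / (1 - norm (w k)))"
    proof (rule prod_mono, safe)
      fix k assume k: "k \<in> J"
      show "0 \<le> (\<Sum>j\<le>N. norm (w k) ^ j)" by (intro sum_nonneg) auto
      have "(\<Sum>j\<le>N. norm (w k) ^ j) \<le> (\<Sum>j. norm (w k) ^ j)"
        using w[OF k] by (intro sum_le_suminf summable_geometric) auto
      also have "\<dots> = 1 / (1 - norm (w k))"
        using w[OF k] by (subst suminf_geometric) auto
      finally show "(\<Sum>j\<le>N. norm (w k) ^ j) \<le> 1 / (1 - norm (w k))" .
    qed
    finally show "(\<Sum>m\<in>F. norm (\<Prod>k\<in>J. w k ^ m k)) \<le> (\<Prod>k\<in>J. 1 / (1 - norm (w k)))" .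
  qed
  have "infsum (\<lambda>m. \<Prod>k\<in>J. w k ^ m k) (PiE J (\<lambda>_. UNIV)) = (\<Prod>k\<in>J. infsum (\<lambda>j. w k ^ j) UNIV)"
  proof (rule infsum_prod_PiE_abs[OF J])
    fix k assume k: "k \<in> J"
    show "(\<lambda>j. norm (w k ^ j)) summable_on UNIV"
      using geom_has_sum[of "norm (w k)"] w[OF k]
      by (auto simp: norm_power summable_on_def)
  qed
  also have "\<dots> = (\<Prod>k\<in>J. 1/(1 - w k))"
    using geom_has_sum w by (intro prod.cong refl) (simp add: infsumI geom_has_sum)
  finally show ?thesis using abs_summable_summable[OF abs] by (simp add: has_sum_iff)
qed


definition ap :: "nat set \<Rightarrow> (nat \<Rightarrow> real) \<Rightarrow> (nat \<Rightarrow> real) \<Rightarrow> real" where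
  "ap J f z = (\<Sum>i\<in>J. f i * z i)"

definition rv :: "(nat \<Rightarrow> int) \<Rightarrow> nat \<Rightarrow> real" where
  "rv z = (\<lambda>i. real_of_int (z i))"

definition supp_on :: "nat set \<Rightarrow> (nat \<Rightarrow> 'a::zero) \<Rightarrow> bool" where
  "supp_on J z \<longleftrightarrow> (\<forall>i. i \<notin> J \<longrightarrow> z i = 0)"

definition scone :: "nat set \<Rightarrow> (nat \<Rightarrow> nat \<Rightarrow> int) \<Rightarrow> (nat \<Rightarrow> nat \<Rightarrow> real) \<Rightarrow> bool" where
  "scone J V L \<longleftrightarrow> (\<forall>k\<in>J. supp_on J (V k)) \<and>
     (\<forall>k\<in>J. \<forall>j\<in>J. ap J (L k) (rv (V j)) = (if k = j then 1 else 0)) \<and>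
     (\<forall>z. \<forall>i\<in>J. z i = (\<Sum>k\<in>J. ap J (L k) z * rv (V k) i))"

definition pos :: "real \<Rightarrow> real \<Rightarrow> bool" where
  "pos a b \<longleftrightarrow> 0 < a \<or> (a = 0 \<and> 0 < b)"

definition inq :: "nat set \<Rightarrow> (nat \<Rightarrow> nat \<Rightarrow> real) \<Rightarrow> (nat \<Rightarrow> real) \<Rightarrow> (nat \<Rightarrow> int) \<Rightarrow> bool" where
  "inq J L q z \<longleftrightarrow> supp_on J z \<and> (\<forall>k\<in>J. pos (ap J (L k) (rv z)) (ap J (L k) q))"

lemma ap_lin: "ap J (\<lambda>x. a * f x + b * g x) z = a * ap J f z + b * ap J g z"
  by (simp add: ap_def sum.distrib sum_distrib_left algebra_simps)

lemma ap_diff: "ap J (\<lambda>x. f x - b * g x) z = ap J f z - b * ap J g z"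
  by (simp add: ap_def sum_subtractf sum_distrib_left algebra_simps)

lemma ap_div: "ap J (\<lambda>x. f x / a) z = ap J f z / a"
  by (simp add: ap_def sum_divide_distrib)

lemma ap_lin2: "ap J f (\<lambda>x. a * z x + b * y x) = a * ap J f z + b * ap J f y"
  by (simp add: ap_def sum.distrib sum_distrib_left algebra_simps)

lemma pos_scale: "c > 0 \<Longrightarrow> pos (c * a) (c * b) \<longleftrightarrow> pos a b"
  by (auto simp: pos_def zero_less_mult_iff)

lemma pos_div: "c > 0 \<Longrightarrow> pos (a / c) (b / c) \<longleftrightarrow> pos a b"
  by (auto simp: pos_def zero_less_divide_iff)

lemma pos_add: "pos a b \<Longrightarrow> pos c d \<Longrightarrow> pos (a + c) (b + d)"
  by (auto simp: pos_def)

lemma pos_neg: "pos a b \<Longrightarrow> pos (-a) (-b) \<Longrightarrow> False"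
  by (auto simp: pos_def)

lemma pos_cases: "b \<noteq> 0 \<Longrightarrow> pos a b \<or> pos (-a) (-b)"
  by (auto simp: pos_def)

lemma pos_nonneg: "pos a b \<Longrightarrow> a \<ge> 0"
  by (auto simp: pos_def)

lemma rv_lin: "rv (\<lambda>x. a * V x + b * W x) = (\<lambda>x. real_of_int a * rv V x + real_of_int b * rv W x)"
  by (simp add: rv_def fun_eq_iff)

lemma sum_split2:
  assumes "finite J" "i \<in> J" "j \<in> J" "i \<noteq> j"
  shows "(\<Sum>k\<in>J. f k) = f i + f j + (\<Sum>k\<in>J - {i, j}. f k)"
proof -
  have "(\<Sum>k\<in>J. f k) = f i + (\<Sum>k\<in>J - {i}. f k)" using assms by (simp add: sum.remove)
  also have "(\<Sum>k\<in>J - {i}. f k) = f j + (\<Sum>k\<in>J - {i} - {j}. f k)"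
    using assms by (intro sum.remove) auto
  finally show ?thesis by (simp add: Diff_insert2[symmetric] insert_commute add.assoc)
qed

lemma stellar_scone:
  assumes S: "scone J V L" and J: "finite J" and ij: "i \<in> J" "j \<in> J" "i \<noteq> j"
    and ab: "(\<alpha>::int) > 0" "(\<beta>::int) > 0"
  shows "scone J (V(i := (\<lambda>x. \<alpha> * V i x + \<beta> * V j x)))
            (L(i := (\<lambda>x. L i x / \<alpha>), j := (\<lambda>x. L j x - (\<beta>/\<alpha>) * L i x)))"
proof -
  define w where "w = (\<lambda>x. \<alpha> * V i x + \<beta> * V j x)"
  define V' where "V' = V(i := w)"
  define L' where "L' = L(i := (\<lambda>x. L i x / \<alpha>), j := (\<lambda>x. L j x - (\<beta>/\<alpha>) * L i x))"
  have s1: "\<forall>k\<in>J. supp_on J (V k)" and s2: "\<forall>k\<in>J. \<forall>l\<in>J. ap J (L k) (rv (V l)) = (if k = l then 1 else 0)"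
    and s3: "\<forall>z. \<forall>x\<in>J. z x = (\<Sum>k\<in>J. ap J (L k) z * rv (V k) x)"
    using S by (auto simp: scone_def)
  have apw: "ap J f (rv w) = \<alpha> * ap J f (rv (V i)) + \<beta> * ap J f (rv (V j))" for f
    unfolding w_def rv_lin ap_lin2 ..
  have a0: "real_of_int \<alpha> \<noteq> 0" using ab by simp
  have Li: "ap J (L' i) v = ap J (L i) v / \<alpha>" for v
    using ij by (simp add: L'_def ap_div)
  have Lj: "ap J (L' j) v = ap J (L j) v - (\<beta>/\<alpha>) * ap J (L i) v" for v
    using ij ap_diff[of J "L j" "\<beta>/\<alpha>" "L i" v] by (simp add: L'_def)
  have Lk: "k \<noteq> i \<Longrightarrow> k \<noteq> j \<Longrightarrow> ap J (L' k) v = ap J (L k) v" for k v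
    by (simp add: L'_def)
  have t1: "\<forall>k\<in>J. supp_on J (V' k)"
    using s1 ij by (auto simp: V'_def w_def supp_on_def)
  have t2: "ap J (L' k) (rv (V' l)) = (if k = l then 1 else 0)" if kl: "k \<in> J" "l \<in> J" for k l
  proof -
    consider "k = i" | "k = j" | "k \<noteq> i" "k \<noteq> j" by blast
    then show ?thesis
    proof cases
      case 1
      then show ?thesis using kl s2 ij a0
        by (cases "l = i") (auto simp: Li V'_def apw)
    next
      case 2
      then show ?thesis using kl s2 ij a0
        by (cases "l = i") (auto simp: Lj V'_def apw field_simps)
    next
      case 3
      then show ?thesis using kl s2 ij a0
        by (cases "l = i") (auto simp: Lk V'_def apw)
    qed
  qed
  have t3: "z x = (\<Sum>k\<in>J. ap J (L' k) z * rv (V' k) x)" if x: "x \<in> J" for z x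
  proof -
    have "(\<Sum>k\<in>J. ap J (L' k) z * rv (V' k) x) =
        ap J (L' i) z * rv (V' i) x + ap J (L' j) z * rv (V' j) x + (\<Sum>k\<in>J-{i,j}. ap J (L' k) z * rv (V' k) x)"
      by (rule sum_split2[OF J ij])
    also have "(\<Sum>k\<in>J-{i,j}. ap J (L' k) z * rv (V' k) x) = (\<Sum>k\<in>J-{i,j}. ap J (L k) z * rv (V k) x)"
      by (intro sum.cong refl) (auto simp: Lk V'_def)
    also have "ap J (L' i) z * rv (V' i) x + ap J (L' j) z * rv (V' j) x =
        ap J (L i) z * rv (V i) x + ap J (L j) z * rv (V j) x"
      using ij a0 by (simp add: Li Lj V'_def w_def rv_def field_simps)
    also have "\<dots> + (\<Sum>k\<in>J-{i,j}. ap J (L k) z * rv (V k) x) = (\<Sum>k\<in>J. ap J (L k) z * rv (V k) x)"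
      by (rule sum_split2[OF J ij, symmetric])
    also have "\<dots> = z x" using s3 x by auto
    finally show ?thesis by simp
  qed
  show ?thesis
    unfolding scone_def using t1 t2 t3 by (auto simp: V'_def L'_def w_def)
qed

lemma ball_split2: "i \<in> J \<Longrightarrow> j \<in> J \<Longrightarrow> (\<forall>k\<in>J. P k) \<longleftrightarrow> P i \<and> P j \<and> (\<forall>k\<in>J-{i,j}. P k)"
  by auto

lemma pos_core:
  assumes c: "c > 0" and e: "b' - c * a' \<noteq> 0"
  shows "(pos a a' \<and> pos b b') \<longleftrightarrow> (pos a a' \<and> pos (b - c * a) (b' - c * a')) \<or>
            (pos b b' \<and> pos (a - (1/c) * b) (a' - (1/c) * b'))"
    and "\<not> (pos (b - c * a) (b' - c * a') \<and> pos (a - (1/c) * b) (a' - (1/c) * b'))"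
proof -
  have r: "a - (1/c) * b = (1/c) * (-(b - c * a))" "a' - (1/c) * b' = (1/c) * (-(b' - c * a'))"
    using c by (auto simp: field_simps)
  have r2: "b = (b - c * a) + c * a" "b' = (b' - c * a') + c * a'" by auto
  have r3: "a = (1/c) * (b + (-(b - c * a)))" "a' = (1/c) * (b' + (-(b' - c * a')))"
    using c by (auto simp: field_simps)
  have ic: "1/c > 0" using c by auto
  show "\<not> (pos (b - c * a) (b' - c * a') \<and> pos (a - (1/c) * b) (a' - (1/c) * b'))"
    unfolding r pos_scale[OF ic] using pos_neg by blast
  show "(pos a a' \<and> pos b b') \<longleftrightarrow> (pos a a' \<and> pos (b - c * a) (b' - c * a')) \<or>
            (pos b b' \<and> pos (a - (1/c) * b) (a' - (1/c) * b'))"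
  proof -
    have f1: "pos (b - c * a) (b' - c * a') \<or> pos (a - 1 / c * b) (a' - 1 / c * b')"
      unfolding r pos_scale[OF ic] using pos_cases[OF e] by blast
    have f2: "pos b b'" if "pos a a'" "pos (b - c * a) (b' - c * a')"
      using that pos_add[of "b - c * a" "b' - c * a'" "c * a" "c * a'"] pos_scale[OF c] by simp
    have f3: "pos a a'" if "pos b b'" "pos (a - 1 / c * b) (a' - 1 / c * b')"
      using that unfolding r pos_scale[OF ic]
      using pos_add[of b b' "-(b - c * a)" "-(b' - c * a')"] r3 pos_scale[OF ic] pos_scale[OF c] by simp
    show ?thesis using f1 f2 f3 by blast
  qed
qed

lemma stellar_split:
  assumes ij: "i \<in> J" "j \<in> J" "i \<noteq> j" and ab: "(\<alpha>::int) > 0" "(\<beta>::int) > 0"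
    and gen: "ap J (\<lambda>x. L j x - (\<beta>/\<alpha>) * L i x) q \<noteq> 0"
  defines "L1 \<equiv> L(i := (\<lambda>x. L i x / \<alpha>), j := (\<lambda>x. L j x - (\<beta>/\<alpha>) * L i x))"
    and "L2 \<equiv> L(j := (\<lambda>x. L j x / \<beta>), i := (\<lambda>x. L i x - (\<alpha>/\<beta>) * L j x))"
  shows "inq J L q z \<longleftrightarrow> inq J L1 q z \<or> inq J L2 q z"
    and "\<not> (inq J L1 q z \<and> inq J L2 q z)"
proof -
  define c where "c = real_of_int \<beta> / real_of_int \<alpha>"
  have c: "c > 0" using ab by (simp add: c_def)
  have ic: "1 / c = real_of_int \<alpha> / real_of_int \<beta>" by (simp add: c_def)
  have a0: "real_of_int \<alpha> > 0" "real_of_int \<beta> > 0" using ab by auto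
  define a where "a = ap J (L i) (rv z)"
  define a' where "a' = ap J (L i) q"
  define b where "b = ap J (L j) (rv z)"
  define b' where "b' = ap J (L j) q"
  have e: "b' - c * a' \<noteq> 0" using gen ap_diff[of J "L j" "\<beta>/\<alpha>" "L i" q]
    by (simp add: b'_def a'_def c_def)
  have L1i: "pos (ap J (L1 i) (rv z)) (ap J (L1 i) q) \<longleftrightarrow> pos a a'"
    using ij a0 by (simp add: L1_def ap_div pos_div a_def a'_def)
  have L1j: "pos (ap J (L1 j) (rv z)) (ap J (L1 j) q) \<longleftrightarrow> pos (b - c * a) (b' - c * a')"
    using ij ap_diff[of J "L j" "\<beta>/\<alpha>" "L i"]
    by (simp add: L1_def a_def a'_def b_def b'_def c_def)
  have L2j: "pos (ap J (L2 j) (rv z)) (ap J (L2 j) q) \<longleftrightarrow> pos b b'"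
    using ij a0 by (simp add: L2_def ap_div pos_div b_def b'_def)
  have L2i: "pos (ap J (L2 i) (rv z)) (ap J (L2 i) q) \<longleftrightarrow> pos (a - (1/c) * b) (a' - (1/c) * b')"
    using ij ap_diff[of J "L i" "\<alpha>/\<beta>" "L j"] unfolding ic
    by (simp add: L2_def a_def a'_def b_def b'_def)
  have Lk: "k \<noteq> i \<Longrightarrow> k \<noteq> j \<Longrightarrow> L1 k = L k \<and> L2 k = L k" for k
    by (simp add: L1_def L2_def)
  have inqL: "inq J L q z \<longleftrightarrow> supp_on J z \<and> pos a a' \<and> pos b b' \<and> (\<forall>k\<in>J-{i,j}. pos (ap J (L k) (rv z)) (ap J (L k) q))"
    unfolding inq_def ball_split2[OF ij(1,2)] a_def a'_def b_def b'_def by blast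
  have inq1: "inq J L1 q z \<longleftrightarrow> supp_on J z \<and> pos a a' \<and> pos (b - c * a) (b' - c * a') \<and> (\<forall>k\<in>J-{i,j}. pos (ap J (L k) (rv z)) (ap J (L k) q))"
    unfolding inq_def ball_split2[OF ij(1,2)] L1i L1j using Lk by auto
  have inq2: "inq J L2 q z \<longleftrightarrow> supp_on J z \<and> pos (a - (1/c) * b) (a' - (1/c) * b') \<and> pos b b' \<and> (\<forall>k\<in>J-{i,j}. pos (ap J (L k) (rv z)) (ap J (L k) q))"
    unfolding inq_def ball_split2[OF ij(1,2)] L2i L2j using Lk by auto
  show "inq J L q z \<longleftrightarrow> inq J L1 q z \<or> inq J L2 q z"
    unfolding inqL inq1 inq2 using pos_core(1)[OF c e] by blast
  show "\<not> (inq J L1 q z \<and> inq J L2 q z)"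
    unfolding inq1 inq2 using pos_core(2)[OF c e] by blast
qed


type_synonym cone = "(nat \<Rightarrow> nat \<Rightarrow> int) \<times> (nat \<Rightarrow> nat \<Rightarrow> real)"

definition cnt :: "nat set \<Rightarrow> (nat \<Rightarrow> real) \<Rightarrow> (nat \<Rightarrow> int) \<Rightarrow> cone list \<Rightarrow> nat" where
  "cnt J q z Ts = length (filter (\<lambda>T. inq J (snd T) q z) Ts)"

definition decomp :: "nat set \<Rightarrow> (nat \<Rightarrow> nat \<Rightarrow> real) \<Rightarrow> cone list \<Rightarrow> (nat \<Rightarrow> real) set \<Rightarrow> bool" where
  "decomp J L Ts G \<longleftrightarrow> finite G \<and> (\<forall>g\<in>G. \<exists>x\<in>J. g x \<noteq> 0) \<and> (\<forall>T\<in>set Ts. scone J (fst T) (snd T)) \<and>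
    (\<forall>q. (\<forall>g\<in>G. ap J g q \<noteq> 0) \<longrightarrow> (\<forall>z. cnt J q z Ts = (if inq J L q z then 1 else 0)))"

definition dt :: "nat set \<Rightarrow> (nat \<Rightarrow> int) \<Rightarrow> (nat \<Rightarrow> int) \<Rightarrow> int" where
  "dt J b v = (\<Sum>x\<in>J. b x * v x)"

definition nonneg :: "nat set \<Rightarrow> (nat \<Rightarrow> nat \<Rightarrow> int) \<Rightarrow> bool" where
  "nonneg J V \<longleftrightarrow> (\<forall>k\<in>J. \<forall>x. V k x \<ge> 0)"

definition onesided :: "nat set \<Rightarrow> (nat \<Rightarrow> int) \<Rightarrow> (nat \<Rightarrow> nat \<Rightarrow> int) \<Rightarrow> bool" where
  "onesided J b V \<longleftrightarrow> (\<forall>k\<in>J. dt J b (V k) \<ge> 0) \<or> (\<forall>k\<in>J. dt J b (V k) \<le> 0)"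

lemma cnt_append: "cnt J q z (A @ B) = cnt J q z A + cnt J q z B"
  by (simp add: cnt_def)

lemma cnt_Cons: "cnt J q z (T # B) = (if inq J (snd T) q z then 1 else 0) + cnt J q z B"
  by (simp add: cnt_def)

lemma dt_lin: "dt J b (\<lambda>x. a * V x + c * W x) = a * dt J b V + c * dt J b W"
  by (simp add: dt_def sum.distrib sum_distrib_left algebra_simps)

lemma ap_nonzero: "ap J g v \<noteq> 0 \<Longrightarrow> \<exists>x\<in>J. g x \<noteq> 0"
  unfolding ap_def by (metis (no_types, lifting) mult_zero_left sum.neutral)

lemma decomp_refl: "scone J V L \<Longrightarrow> decomp J L [(V, L)] {}"
  by (simp add: decomp_def cnt_def)

lemma cut_one:
  assumes J: "finite J"
  shows "scone J V L \<Longrightarrow> nonneg J V \<Longrightarrow> (\<forall>b'\<in>set B. onesided J b' V) \<Longrightarrow>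
    \<exists>Ts G. decomp J L Ts G \<and> (\<forall>T\<in>set Ts. nonneg J (fst T) \<and> (\<forall>b'\<in>set (b # B). onesided J b' (fst T)))"
proof (induction "card {k\<in>J. dt J b (V k) \<noteq> 0}" arbitrary: V L rule: less_induct)
  case less
  show ?case
  proof (cases "onesided J b V")
    case True
    then show ?thesis using less.prems decomp_refl[of J V L] by (intro exI[of _ "[(V, L)]"] exI[of _ "{}"]) auto
  next
    case False
    then obtain i j where ij: "i \<in> J" "j \<in> J" "dt J b (V i) > 0" "dt J b (V j) < 0"
      unfolding onesided_def by (auto simp: not_le)
    then have inj: "i \<noteq> j" by auto
    define \<alpha> where "\<alpha> = - dt J b (V j)"
    define \<beta> where "\<beta> = dt J b (V i)"
    have ab: "\<alpha> > 0" "\<beta> > 0" using ij by (auto simp: \<alpha>_def \<beta>_def)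
    define w where "w = (\<lambda>x. \<alpha> * V i x + \<beta> * V j x)"
    have w': "(\<lambda>x. \<beta> * V j x + \<alpha> * V i x) = w" by (simp add: w_def fun_eq_iff add.commute)
    have dtw: "dt J b w = 0" unfolding w_def dt_lin by (simp add: \<alpha>_def \<beta>_def)
    define V1 where "V1 = V(i := w)"
    define V2 where "V2 = V(j := w)"
    define L1 where "L1 = L(i := (\<lambda>x. L i x / \<alpha>), j := (\<lambda>x. L j x - (\<beta>/\<alpha>) * L i x))"
    define L2 where "L2 = L(j := (\<lambda>x. L j x / \<beta>), i := (\<lambda>x. L i x - (\<alpha>/\<beta>) * L j x))"
    have S1: "scone J V1 L1" unfolding V1_def L1_def w_def
      by (rule stellar_scone[OF less.prems(1) J ij(1,2) inj ab])
    have S2: "scone J V2 L2" unfolding V2_def L2_def w'[symmetric]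
      by (rule stellar_scone[OF less.prems(1) J ij(2,1) inj[symmetric] ab(2,1)])
    have wnn: "w x \<ge> 0" for x using less.prems(2) ab ij unfolding w_def nonneg_def
      by (intro add_nonneg_nonneg mult_nonneg_nonneg) auto
    have nn: "nonneg J V1" "nonneg J V2" using less.prems(2) wnn
      by (auto simp: nonneg_def V1_def V2_def)
    have os: "\<forall>b'\<in>set B. onesided J b' V1" "\<forall>b'\<in>set B. onesided J b' V2"
    proof -
      have "onesided J b' V1 \<and> onesided J b' V2" if "b' \<in> set B" for b'
      proof -
        have o: "onesided J b' V" using less.prems(3) that by auto
        have e: "dt J b' w = \<alpha> * dt J b' (V i) + \<beta> * dt J b' (V j)" unfolding w_def dt_lin ..
        have "dt J b' w \<ge> 0" if "\<forall>k\<in>J. dt J b' (V k) \<ge> 0"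
          unfolding e using that ij ab by (intro add_nonneg_nonneg mult_nonneg_nonneg) auto
        moreover have "dt J b' w \<le> 0" if "\<forall>k\<in>J. dt J b' (V k) \<le> 0"
          unfolding e using that ij ab by (intro add_nonpos_nonpos mult_nonneg_nonpos) auto
        ultimately show ?thesis using o unfolding onesided_def V1_def V2_def by auto
      qed
      then show "\<forall>b'\<in>set B. onesided J b' V1" "\<forall>b'\<in>set B. onesided J b' V2" by auto
    qed
    have c1: "card {k\<in>J. dt J b (V1 k) \<noteq> 0} < card {k\<in>J. dt J b (V k) \<noteq> 0}"
    proof -
      have eq: "{k\<in>J. dt J b (V1 k) \<noteq> 0} = {k\<in>J. dt J b (V k) \<noteq> 0} - {i}"
        unfolding V1_def using dtw by auto
      have "card ({k\<in>J. dt J b (V k) \<noteq> 0} - {i}) < card {k\<in>J. dt J b (V k) \<noteq> 0}"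
        by (rule card_Diff1_less) (use ij J in auto)
      then show ?thesis unfolding eq .
    qed
    have c2: "card {k\<in>J. dt J b (V2 k) \<noteq> 0} < card {k\<in>J. dt J b (V k) \<noteq> 0}"
    proof -
      have eq: "{k\<in>J. dt J b (V2 k) \<noteq> 0} = {k\<in>J. dt J b (V k) \<noteq> 0} - {j}"
        unfolding V2_def using dtw by auto
      have "card ({k\<in>J. dt J b (V k) \<noteq> 0} - {j}) < card {k\<in>J. dt J b (V k) \<noteq> 0}"
        by (rule card_Diff1_less) (use ij J in auto)
      then show ?thesis unfolding eq .
    qed
    obtain Ts1 G1 where T1: "decomp J L1 Ts1 G1"
      "\<forall>T\<in>set Ts1. nonneg J (fst T) \<and> (\<forall>b'\<in>set (b # B). onesided J b' (fst T))"
      using less.hyps[OF c1 S1 nn(1) os(1)] by blast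
    obtain Ts2 G2 where T2: "decomp J L2 Ts2 G2"
      "\<forall>T\<in>set Ts2. nonneg J (fst T) \<and> (\<forall>b'\<in>set (b # B). onesided J b' (fst T))"
      using less.hyps[OF c2 S2 nn(2) os(2)] by blast
    define g where "g = (\<lambda>x. L j x - (\<beta>/\<alpha>) * L i x)"
    have gL1: "L1 j = g" using inj by (simp add: L1_def g_def)
    have gnz: "\<exists>x\<in>J. g x \<noteq> 0"
    proof -
      have "ap J (L1 j) (rv (V1 j)) = 1" using S1 ij by (auto simp: scone_def)
      then show ?thesis unfolding gL1 by (intro ap_nonzero[of _ _ "rv (V1 j)"]) simp
    qed
    have "decomp J L (Ts1 @ Ts2) (insert g (G1 \<union> G2))"
      unfolding decomp_def
    proof (intro conjI allI impI)
      show "finite (insert g (G1 \<union> G2))" using T1 T2 by (auto simp: decomp_def)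
      show "\<forall>g\<in>insert g (G1 \<union> G2). \<exists>x\<in>J. g x \<noteq> 0" using T1 T2 gnz by (auto simp: decomp_def)
      show "\<forall>T\<in>set (Ts1 @ Ts2). scone J (fst T) (snd T)" using T1 T2 by (auto simp: decomp_def)
      fix q z assume q: "\<forall>g\<in>insert g (G1 \<union> G2). ap J g q \<noteq> 0"
      have q1: "\<forall>g\<in>G1. ap J g q \<noteq> 0" "\<forall>g\<in>G2. ap J g q \<noteq> 0" using q by blast+
      have e1: "cnt J q z Ts1 = (if inq J L1 q z then 1 else 0)" using T1(1) q1(1) unfolding decomp_def by blast
      have e2: "cnt J q z Ts2 = (if inq J L2 q z then 1 else 0)" using T2(1) q1(2) unfolding decomp_def by blast
      have gen: "ap J (\<lambda>x. L j x - (\<beta>/\<alpha>) * L i x) q \<noteq> 0" using q unfolding g_def by blast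
      note sp = stellar_split[OF ij(1,2) inj ab gen, of z, folded L1_def L2_def]
      show "cnt J q z (Ts1 @ Ts2) = (if inq J L q z then 1 else 0)"
        unfolding cnt_append e1 e2 using sp by auto
    qed
    moreover have "\<forall>T\<in>set (Ts1 @ Ts2). nonneg J (fst T) \<and> (\<forall>b'\<in>set (b # B). onesided J b' (fst T))"
      using T1(2) T2(2) by auto
    ultimately show ?thesis by blast
  qed
qed

lemma decomp_refine_aux:
  assumes "\<forall>T\<in>set Ts. \<exists>Us H. decomp J (snd T) Us H \<and> (\<forall>U\<in>set Us. R U)"
  shows "\<exists>Us H. finite H \<and> (\<forall>g\<in>H. \<exists>x\<in>J. g x \<noteq> 0) \<and> (\<forall>U\<in>set Us. scone J (fst U) (snd U) \<and> R U) \<and>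
    (\<forall>q. (\<forall>g\<in>H. ap J g q \<noteq> 0) \<longrightarrow> (\<forall>z. cnt J q z Us = cnt J q z Ts))"
  using assms
proof (induction Ts)
  case Nil
  then show ?case by (intro exI[of _ "[]"] exI[of _ "{}"]) (auto simp: cnt_def)
next
  case (Cons T Ts)
  obtain Us H where UH: "finite H" "\<forall>g\<in>H. \<exists>x\<in>J. g x \<noteq> 0" "\<forall>U\<in>set Us. scone J (fst U) (snd U) \<and> R U"
    "\<forall>q. (\<forall>g\<in>H. ap J g q \<noteq> 0) \<longrightarrow> (\<forall>z. cnt J q z Us = cnt J q z Ts)"
    using Cons by auto
  obtain Us1 H1 where U1: "decomp J (snd T) Us1 H1" "\<forall>U\<in>set Us1. R U" using Cons.prems by auto
  show ?case
  proof (intro exI[of _ "Us1 @ Us"] exI[of _ "H1 \<union> H"] conjI allI impI)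
    show "finite (H1 \<union> H)" using UH U1 by (auto simp: decomp_def)
    show "\<forall>g\<in>H1 \<union> H. \<exists>x\<in>J. g x \<noteq> 0" using UH U1 by (auto simp: decomp_def)
    show "\<forall>U\<in>set (Us1 @ Us). scone J (fst U) (snd U) \<and> R U" using UH U1 by (auto simp: decomp_def)
    fix q z assume q: "\<forall>g\<in>H1 \<union> H. ap J g q \<noteq> 0"
    have q1: "\<forall>g\<in>H1. ap J g q \<noteq> 0" "\<forall>g\<in>H. ap J g q \<noteq> 0" using q by blast+
    have "cnt J q z Us1 = (if inq J (snd T) q z then 1 else 0)" using U1(1) q1(1) unfolding decomp_def by blast
    moreover have "cnt J q z Us = cnt J q z Ts" using UH(4) q1(2) by blast
    ultimately show "cnt J q z (Us1 @ Us) = cnt J q z (T # Ts)"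
      unfolding cnt_append cnt_Cons by simp
  qed
qed

lemma decomp_refine:
  assumes "decomp J L Ts G" "\<forall>T\<in>set Ts. \<exists>Us H. decomp J (snd T) Us H \<and> (\<forall>U\<in>set Us. R U)"
  shows "\<exists>Us H. decomp J L Us H \<and> (\<forall>U\<in>set Us. R U)"
proof -
  obtain Us H where UH: "finite H" "\<forall>g\<in>H. \<exists>x\<in>J. g x \<noteq> 0" "\<forall>U\<in>set Us. scone J (fst U) (snd U) \<and> R U"
    "\<forall>q. (\<forall>g\<in>H. ap J g q \<noteq> 0) \<longrightarrow> (\<forall>z. cnt J q z Us = cnt J q z Ts)"
    using decomp_refine_aux[OF assms(2)] by blast
  have "decomp J L Us (G \<union> H)"
    unfolding decomp_def
  proof (intro conjI allI impI)
    show "finite (G \<union> H)" using assms(1) UH(1) by (simp add: decomp_def)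
    show "\<forall>g\<in>G \<union> H. \<exists>x\<in>J. g x \<noteq> 0" using assms(1) UH(2) unfolding decomp_def by blast
    show "\<forall>T\<in>set Us. scone J (fst T) (snd T)" using UH(3) by blast
    fix q z assume q: "\<forall>g\<in>G \<union> H. ap J g q \<noteq> 0"
    have q1: "\<forall>g\<in>G. ap J g q \<noteq> 0" "\<forall>g\<in>H. ap J g q \<noteq> 0" using q by blast+
    have "cnt J q z Ts = (if inq J L q z then 1 else 0)" using assms(1) q1(1) unfolding decomp_def by blast
    moreover have "cnt J q z Us = cnt J q z Ts" using UH(4) q1(2) by blast
    ultimately show "cnt J q z Us = (if inq J L q z then 1 else 0)" by simp
  qed
  then show ?thesis using UH by blast
qed

lemma cut_all:
  assumes J: "finite J" and S: "scone J V L" "nonneg J V"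
  shows "\<exists>Ts G. decomp J L Ts G \<and> (\<forall>T\<in>set Ts. nonneg J (fst T) \<and> (\<forall>b\<in>set B. onesided J b (fst T)))"
proof (induction B)
  case Nil
  then show ?case using decomp_refl[OF S(1)] S by (intro exI[of _ "[(V, L)]"] exI[of _ "{}"]) auto
next
  case (Cons b B)
  then obtain Ts G where TG: "decomp J L Ts G" "\<forall>T\<in>set Ts. nonneg J (fst T) \<and> (\<forall>b\<in>set B. onesided J b (fst T))"
    by blast
  have "\<forall>T\<in>set Ts. \<exists>Us H. decomp J (snd T) Us H \<and>
      (\<forall>U\<in>set Us. nonneg J (fst U) \<and> (\<forall>b'\<in>set (b # B). onesided J b' (fst U)))"
  proof
    fix T assume T: "T \<in> set Ts"
    have "scone J (fst T) (snd T)" using TG T by (auto simp: decomp_def)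
    then show "\<exists>Us H. decomp J (snd T) Us H \<and>
      (\<forall>U\<in>set Us. nonneg J (fst U) \<and> (\<forall>b'\<in>set (b # B). onesided J b' (fst U)))"
      using cut_one[OF J, of "fst T" "snd T" B b] TG(2) T by auto
  qed
  then show ?case using decomp_refine[OF TG(1)] by blast
qed


definition SO :: "nat set \<Rightarrow> (nat \<Rightarrow> nat \<Rightarrow> real) \<Rightarrow> nat set \<Rightarrow> (nat \<Rightarrow> int) set" where
  "SO J L Op = {z. supp_on J z \<and> (\<forall>k\<in>J. if k \<in> Op then ap J (L k) (rv z) > 0 else ap J (L k) (rv z) \<ge> 0)}"

definition Par :: "nat set \<Rightarrow> (nat \<Rightarrow> nat \<Rightarrow> real) \<Rightarrow> nat set \<Rightarrow> (nat \<Rightarrow> int) set" where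
  "Par J L Op = {p. supp_on J p \<and> (\<forall>k\<in>J. if k \<in> Op then 0 < ap J (L k) (rv p) \<and> ap J (L k) (rv p) \<le> 1
                                    else 0 \<le> ap J (L k) (rv p) \<and> ap J (L k) (rv p) < 1)}"

definition comb :: "nat set \<Rightarrow> (nat \<Rightarrow> nat \<Rightarrow> int) \<Rightarrow> (nat \<Rightarrow> int) \<Rightarrow> nat \<Rightarrow> int" where
  "comb J V c = (\<lambda>x. \<Sum>k\<in>J. c k * V k x)"

definition mchar :: "((nat \<Rightarrow> int) \<Rightarrow> complex) \<Rightarrow> bool" where
  "mchar ch \<longleftrightarrow> (\<forall>z w. ch (\<lambda>x. z x + w x) = ch z * ch w) \<and> ch (\<lambda>x. 0) = 1"

lemma mchar_sum:
  assumes "mchar ch" "finite K"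
  shows "ch (\<lambda>x. \<Sum>k\<in>K. f k x) = (\<Prod>k\<in>K. ch (f k))"
  using assms(2)
proof (induction K)
  case empty
  then show ?case using assms(1) by (simp add: mchar_def)
next
  case (insert a K)
  then show ?case using assms(1) by (simp add: mchar_def)
qed

lemma mchar_pow:
  assumes "mchar ch"
  shows "ch (\<lambda>x. int n * v x) = ch v ^ n"
proof (induction n)
  case 0
  then show ?case using assms by (simp add: mchar_def)
next
  case (Suc n)
  have "ch (\<lambda>x. int (Suc n) * v x) = ch (\<lambda>x. v x + int n * v x)" by (simp add: algebra_simps)
  also have "\<dots> = ch v * ch (\<lambda>x. int n * v x)" using assms by (simp add: mchar_def)
  finally show ?case using Suc by simp
qed

lemma mchar_nz:
  assumes "mchar ch"
  shows "ch z \<noteq> 0" and "ch (\<lambda>x. - z x) = inverse (ch z)"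
proof -
  have m: "ch (\<lambda>x. a x + b x) = ch a * ch b" "ch (\<lambda>x. 0) = 1" for a b using assms unfolding mchar_def by blast+
  have "ch z * ch (\<lambda>x. - z x) = ch (\<lambda>x. z x + - z x)" using m(1)[of z "\<lambda>x. - z x"] by simp
  also have "\<dots> = 1" using m(2) by simp
  finally have "ch z * ch (\<lambda>x. - z x) = 1" .
  then show "ch z \<noteq> 0" by auto
  show "ch (\<lambda>x. - z x) = inverse (ch z)"
    by (rule inverse_unique[symmetric]) fact
qed

lemma mchar_diff:
  assumes "mchar ch"
  shows "ch (\<lambda>x. z x - w x) = ch z / ch w"
proof -
  have "ch (\<lambda>x. z x - w x) = ch (\<lambda>x. z x + (- w x))" by simp
  also have "\<dots> = ch z * ch (\<lambda>x. - w x)"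
    using conjunct1[OF assms[unfolded mchar_def], rule_format, of z "\<lambda>x. - w x"] by simp
  also have "\<dots> = ch z * inverse (ch w)" using mchar_nz(2)[OF assms, of w] by simp
  finally show ?thesis by (simp add: field_simps)
qed

lemma mchar_inverse: "mchar ch \<Longrightarrow> mchar (\<lambda>z. inverse (ch z))"
  by (simp add: mchar_def)

lemma ap_rv_add: "ap J f (rv (\<lambda>x. z x + w x)) = ap J f (rv z) + ap J f (rv w)"
  by (simp add: ap_def rv_def sum.distrib algebra_simps)

lemma ap_rv_diff: "ap J f (rv (\<lambda>x. z x - w x)) = ap J f (rv z) - ap J f (rv w)"
  by (simp add: ap_def rv_def sum_subtractf algebra_simps)

lemma ap_rv_comb: "finite K \<Longrightarrow> ap J f (rv (\<lambda>x. \<Sum>k\<in>K. c k * V k x)) = (\<Sum>k\<in>K. c k * ap J f (rv (V k)))"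
proof -
  assume K: "finite K"
  have "ap J f (rv (\<lambda>x. \<Sum>k\<in>K. c k * V k x)) = (\<Sum>i\<in>J. \<Sum>k\<in>K. f i * (of_int (c k) * of_int (V k i)))"
    unfolding ap_def rv_def by (simp add: sum_distrib_left)
  also have "\<dots> = (\<Sum>k\<in>K. \<Sum>i\<in>J. f i * (of_int (c k) * of_int (V k i)))" by (rule sum.swap)
  also have "\<dots> = (\<Sum>k\<in>K. of_int (c k) * (\<Sum>i\<in>J. f i * of_int (V k i)))"
    by (simp add: sum_distrib_left mult.left_commute)
  finally show ?thesis by (simp add: ap_def rv_def)
qed

lemma scone_ap_comb:
  assumes "scone J V L" "finite J" "j \<in> J"
  shows "ap J (L j) (rv (comb J V c)) = c j"
proof -
  have "ap J (L j) (rv (comb J V c)) = (\<Sum>k\<in>J. c k * ap J (L j) (rv (V k)))"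
    unfolding comb_def by (rule ap_rv_comb[OF assms(2)])
  also have "\<dots> = (\<Sum>k\<in>J. if k = j then of_int (c k) else 0)"
    using assms(1,3) by (intro sum.cong refl) (auto simp: scone_def)
  also have "\<dots> = c j" using assms(2,3) by simp
  finally show ?thesis .
qed

lemma mchar_comb:
  assumes "mchar ch" "finite J"
  shows "ch (comb J V (\<lambda>k. int (m k))) = (\<Prod>k\<in>J. ch (V k) ^ m k)"
  unfolding comb_def by (simp add: mchar_sum[OF assms] mchar_pow[OF assms(1)])

lemma finite_box:
  assumes "finite J"
  shows "finite {p :: nat \<Rightarrow> int. supp_on J p \<and> (\<forall>x\<in>J. \<bar>p x\<bar> \<le> B x)}"
proof -
  have "{p :: nat \<Rightarrow> int. supp_on J p \<and> (\<forall>x\<in>J. \<bar>p x\<bar> \<le> B x)} \<subseteq>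
      (\<lambda>f x. if x \<in> J then f x else 0) ` PiE J (\<lambda>x. {-B x..B x})"
  proof
    fix p assume p: "p \<in> {p :: nat \<Rightarrow> int. supp_on J p \<and> (\<forall>x\<in>J. \<bar>p x\<bar> \<le> B x)}"
    show "p \<in> (\<lambda>f x. if x \<in> J then f x else 0) ` PiE J (\<lambda>x. {-B x..B x})"
    proof (rule image_eqI[of _ _ "restrict p J"])
      show "p = (\<lambda>x. if x \<in> J then restrict p J x else 0)"
        using p by (auto simp: supp_on_def fun_eq_iff)
      show "restrict p J \<in> PiE J (\<lambda>x. {-B x..B x})" using p by (auto simp: abs_le_iff)
    qed
  qed
  moreover have "finite (PiE J (\<lambda>x. {-B x..B x}))" using assms by (intro finite_PiE) auto
  ultimately show ?thesis by (rule finite_subset[OF _ finite_imageI])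
qed

lemma finite_Par:
  assumes S: "scone J V L" and J: "finite J"
  shows "finite (Par J L Op)"
proof -
  define B where "B x = (\<Sum>k\<in>J. \<bar>V k x\<bar>)" for x
  have "Par J L Op \<subseteq> {p. supp_on J p \<and> (\<forall>x\<in>J. \<bar>p x\<bar> \<le> B x)}"
  proof safe
    fix p assume p: "p \<in> Par J L Op"
    then show "supp_on J p" by (simp add: Par_def)
    fix x assume x: "x \<in> J"
    have lam: "0 \<le> ap J (L k) (rv p) \<and> ap J (L k) (rv p) \<le> 1" if "k \<in> J" for k
      using p that by (auto simp: Par_def split: if_splits)
    have "rv p x = (\<Sum>k\<in>J. ap J (L k) (rv p) * rv (V k) x)" using S x by (simp add: scone_def)
    then have "\<bar>rv p x\<bar> \<le> (\<Sum>k\<in>J. \<bar>ap J (L k) (rv p) * rv (V k) x\<bar>)" by (simp add: sum_abs)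
    also have "\<dots> \<le> (\<Sum>k\<in>J. \<bar>rv (V k) x\<bar>)"
    proof (rule sum_mono)
      fix k assume k: "k \<in> J"
      show "\<bar>ap J (L k) (rv p) * rv (V k) x\<bar> \<le> \<bar>rv (V k) x\<bar>"
        using lam[OF k] by (simp add: abs_mult mult_left_le_one_le)
    qed
    finally show "\<bar>p x\<bar> \<le> B x" by (simp add: B_def rv_def flip: of_int_abs of_int_sum)
  qed
  then show ?thesis using finite_box[OF J, of B] by (rule finite_subset)
qed


lemma supp_comb: "scone J V L \<Longrightarrow> supp_on J (comb J V c)"
  by (auto simp: scone_def supp_on_def comb_def intro!: sum.neutral)

lemma SSL:
  assumes S: "scone J V L" and J: "finite J" and ch: "mchar ch"
    and small: "\<And>k. k \<in> J \<Longrightarrow> norm (ch (V k)) < 1"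
  shows "(ch has_sum ((\<Sum>p\<in>Par J L Op. ch p) * (\<Prod>k\<in>J. 1/(1 - ch (V k))))) (SO J L Op)"
proof -
  define M where "M = PiE J (\<lambda>_. (UNIV::nat set))"
  define G where "G = (\<Prod>k\<in>J. 1/(1 - ch (V k)))"
  define Phi where "Phi p m = (\<lambda>x. p x + comb J V (\<lambda>k. int (m k)) x)" for p and m :: "nat \<Rightarrow> nat"
  have apPhi: "ap J (L k) (rv (Phi p m)) = ap J (L k) (rv p) + real (m k)" if "k \<in> J" for k p m
    unfolding Phi_def ap_rv_add scone_ap_comb[OF S J that] by simp
  have suppPhi: "supp_on J (Phi p m)" if "supp_on J p" for p m
    using that supp_comb[OF S] by (auto simp: supp_on_def Phi_def)
  have m_eq: "m = m'" if "m \<in> M" "m' \<in> M" "\<And>k. k \<in> J \<Longrightarrow> m k = m' k" for m m'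
  proof
    fix x show "m x = m' x" using that by (cases "x \<in> J") (auto simp: M_def PiE_def extensional_def)
  qed
  have chPhi: "ch (Phi p m) = ch p * (\<Prod>k\<in>J. ch (V k) ^ m k)" for p m
    unfolding Phi_def using ch mchar_comb[OF ch J] by (simp add: mchar_def)
  have key: "m k = m' k \<and> ap J (L k) (rv p) = ap J (L k) (rv p')"
    if p: "p \<in> Par J L Op" "p' \<in> Par J L Op" and k: "k \<in> J"
      and e: "ap J (L k) (rv p) + real (m k) = ap J (L k) (rv p') + real (m' k)" for p p' m m' k
  proof -
    define a where "a = ap J (L k) (rv p)"
    define a' where "a' = ap J (L k) (rv p')"
    have pa: "if k \<in> Op then 0 < a \<and> a \<le> 1 else 0 \<le> a \<and> a < 1"
      using p(1) k unfolding Par_def a_def by blast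
    have pa': "if k \<in> Op then 0 < a' \<and> a' \<le> 1 else 0 \<le> a' \<and> a' < 1"
      using p(2) k unfolding Par_def a'_def by blast
    have b: "\<bar>a - a'\<bar> < 1"
      using pa pa' by (cases "k \<in> Op") (auto simp: abs_less_iff)
    have "a - a' = real (m' k) - real (m k)" using e by (simp add: a_def a'_def)
    then have "\<bar>real (m' k) - real (m k)\<bar> < 1" using b by simp
    then have "m k = m' k" by linarith
    then show ?thesis using e by simp
  qed
  have each: "(ch has_sum (ch p * G)) (Phi p ` M)" if p: "p \<in> Par J L Op" for p
  proof -
    have inj: "inj_on (Phi p) M"
    proof (rule inj_onI)
      fix m m' assume m: "m \<in> M" "m' \<in> M" and e: "Phi p m = Phi p m'"
      show "m = m'"
      proof (rule m_eq[OF m])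
        fix k assume k: "k \<in> J"
        have "ap J (L k) (rv (Phi p m)) = ap J (L k) (rv (Phi p m'))" using e by simp
        then show "m k = m' k" using apPhi[OF k] by simp
      qed
    qed
    have "((\<lambda>m. \<Prod>k\<in>J. ch (V k) ^ m k) has_sum G) M"
      unfolding M_def G_def by (rule geom_prod_has_sum[OF J small])
    then have "((\<lambda>m. ch p * (\<Prod>k\<in>J. ch (V k) ^ m k)) has_sum (ch p * G)) M"
      by (rule has_sum_cmult_right)
    then have "((ch \<circ> Phi p) has_sum (ch p * G)) M"
      by (simp add: o_def chPhi)
    then show ?thesis using has_sum_reindex[OF inj, of ch] by simp
  qed
  have disj: "Phi p ` M \<inter> Phi p' ` M = {}" if "p \<in> Par J L Op" "p' \<in> Par J L Op" "p \<noteq> p'" for p p'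
  proof (rule ccontr)
    assume "Phi p ` M \<inter> Phi p' ` M \<noteq> {}"
    then obtain m m' where m: "m \<in> M" "m' \<in> M" and e: "Phi p m = Phi p' m'" by blast
    have mm: "m = m'"
    proof (rule m_eq[OF m])
      fix k assume k: "k \<in> J"
      have "ap J (L k) (rv (Phi p m)) = ap J (L k) (rv (Phi p' m'))" using e by simp
      then show "m k = m' k" using apPhi[OF k] key[OF that(1,2) k] by simp
    qed
    have "p = p'"
    proof
      fix x show "p x = p' x" using fun_cong[OF e, of x] unfolding mm Phi_def by simp
    qed
    then show False using that by simp
  qed
  have union: "SO J L Op = (\<Union>p\<in>Par J L Op. Phi p ` M)"
  proof
    show "(\<Union>p\<in>Par J L Op. Phi p ` M) \<subseteq> SO J L Op"
    proof safe
      fix p m assume p: "p \<in> Par J L Op" and m: "m \<in> M"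
      show "Phi p m \<in> SO J L Op"
        unfolding SO_def using p suppPhi apPhi
        by (auto simp: Par_def split: if_splits)
    qed
    show "SO J L Op \<subseteq> (\<Union>p\<in>Par J L Op. Phi p ` M)"
    proof
      fix z assume z: "z \<in> SO J L Op"
      define lam where "lam k = ap J (L k) (rv z)" for k
      define m where "m = (\<lambda>k. if k \<in> J then (if k \<in> Op then nat (\<lceil>lam k\<rceil> - 1) else nat \<lfloor>lam k\<rfloor>) else undefined)"
      define p where "p = (\<lambda>x. z x - comb J V (\<lambda>k. int (m k)) x)"
      have mM: "m \<in> M" by (auto simp: M_def m_def PiE_def extensional_def)
      have zPhi: "z = Phi p m" by (simp add: Phi_def p_def)
      have lamz: "k \<in> J \<Longrightarrow> (if k \<in> Op then lam k > 0 else lam k \<ge> 0)" for k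
        using z by (auto simp: SO_def lam_def)
      have app: "ap J (L k) (rv p) = lam k - real (m k)" if k: "k \<in> J" for k
        unfolding p_def ap_rv_diff scone_ap_comb[OF S J k] lam_def by simp
      have "p \<in> Par J L Op"
        unfolding Par_def
      proof (intro CollectI conjI ballI)
        show "supp_on J p" using z supp_comb[OF S] by (auto simp: SO_def p_def supp_on_def)
        fix k assume k: "k \<in> J"
        show "if k \<in> Op then 0 < ap J (L k) (rv p) \<and> ap J (L k) (rv p) \<le> 1
              else 0 \<le> ap J (L k) (rv p) \<and> ap J (L k) (rv p) < 1"
        proof (cases "k \<in> Op")
          case True
          then have l: "lam k > 0" using lamz[OF k] by simp
          have "of_int \<lceil>lam k\<rceil> > (0::real)" using le_of_int_ceiling[of "lam k"] l by linarith
          then have c: "\<lceil>lam k\<rceil> \<ge> 1" by simp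
          have "real (m k) = of_int (\<lceil>lam k\<rceil> - 1)" using True k c by (simp add: m_def)
          then show ?thesis using True app[OF k] ceiling_correct[of "lam k"] le_of_int_ceiling[of "lam k"] by simp
        next
          case False
          then have l: "lam k \<ge> 0" using lamz[OF k] by simp
          have "real (m k) = of_int \<lfloor>lam k\<rfloor>" using False k l by (simp add: m_def)
          moreover have "lam k - of_int \<lfloor>lam k\<rfloor> < 1" using real_of_int_floor_add_one_gt[of "lam k"] by linarith
          ultimately show ?thesis using False app[OF k] of_int_floor_le[of "lam k"] by simp
        qed
      qed
      then show "z \<in> (\<Union>p\<in>Par J L Op. Phi p ` M)" using zPhi mM by blast
    qed
  qed
  have "(ch has_sum (\<Sum>p\<in>Par J L Op. ch p * G)) (\<Union>p\<in>Par J L Op. Phi p ` M)"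
    by (rule sum_has_sum[OF finite_Par[OF S J] each disj])
  then show ?thesis unfolding union G_def by (simp add: sum_distrib_right)
qed


lemma RL:
  assumes S: "scone J V L" and J: "finite J" and ch: "mchar ch"
    and big: "\<And>k. k \<in> J \<Longrightarrow> norm (ch (V k)) > 1"
  shows "((\<lambda>z. inverse (ch z)) has_sum ((-1)^card J * ((\<Sum>p\<in>Par J L Op. ch p) * (\<Prod>k\<in>J. 1/(1 - ch (V k))))))
           (SO J L (J - Op))"
proof -
  define ch' where "ch' = (\<lambda>z. inverse (ch z))"
  have ch': "mchar ch'" unfolding ch'_def by (rule mchar_inverse[OF ch])
  have small: "norm (ch' (V k)) < 1" if "k \<in> J" for k
    using big[OF that] by (simp add: ch'_def norm_inverse inverse_less_1_iff)
  have H: "(ch' has_sum ((\<Sum>p\<in>Par J L (J - Op). ch' p) * (\<Prod>k\<in>J. 1/(1 - ch' (V k))))) (SO J L (J - Op))"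
    by (rule SSL[OF S J ch' small])
  define s where "s = comb J V (\<lambda>_. 1)"
  have aps: "ap J (L k) (rv s) = 1" if "k \<in> J" for k
    using scone_ap_comb[OF S J that, of "\<lambda>_. 1"] by (simp add: s_def)
  have ss: "supp_on J s" unfolding s_def by (rule supp_comb[OF S])
  have chs: "ch s = (\<Prod>k\<in>J. ch (V k))"
    using mchar_comb[OF ch J, of V "\<lambda>_. 1"] by (simp add: s_def)
  have refl_par: "(\<lambda>x. s x - p x) \<in> Par J L (J - Op)" if p: "p \<in> Par J L Op" for p
    unfolding Par_def
  proof (intro CollectI conjI ballI)
    show "supp_on J (\<lambda>x. s x - p x)" using p ss by (auto simp: Par_def supp_on_def)
    fix k assume k: "k \<in> J"
    have "if k \<in> Op then 0 < ap J (L k) (rv p) \<and> ap J (L k) (rv p) \<le> 1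
          else 0 \<le> ap J (L k) (rv p) \<and> ap J (L k) (rv p) < 1" using p k unfolding Par_def by blast
    then show "if k \<in> J - Op then 0 < ap J (L k) (rv (\<lambda>x. s x - p x)) \<and> ap J (L k) (rv (\<lambda>x. s x - p x)) \<le> 1
          else 0 \<le> ap J (L k) (rv (\<lambda>x. s x - p x)) \<and> ap J (L k) (rv (\<lambda>x. s x - p x)) < 1"
      using k unfolding ap_rv_diff aps[OF k] by (cases "k \<in> Op") auto
  qed
  have refl_par': "(\<lambda>x. s x - p x) \<in> Par J L Op" if p: "p \<in> Par J L (J - Op)" for p
    unfolding Par_def
  proof (intro CollectI conjI ballI)
    show "supp_on J (\<lambda>x. s x - p x)" using p ss by (auto simp: Par_def supp_on_def)
    fix k assume k: "k \<in> J"
    have "if k \<in> J - Op then 0 < ap J (L k) (rv p) \<and> ap J (L k) (rv p) \<le> 1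
          else 0 \<le> ap J (L k) (rv p) \<and> ap J (L k) (rv p) < 1" using p k unfolding Par_def by blast
    then show "if k \<in> Op then 0 < ap J (L k) (rv (\<lambda>x. s x - p x)) \<and> ap J (L k) (rv (\<lambda>x. s x - p x)) \<le> 1
          else 0 \<le> ap J (L k) (rv (\<lambda>x. s x - p x)) \<and> ap J (L k) (rv (\<lambda>x. s x - p x)) < 1"
      using k unfolding ap_rv_diff aps[OF k] by (cases "k \<in> Op") auto
  qed
  have sumeq: "(\<Sum>p\<in>Par J L (J - Op). ch' p) = (\<Sum>p\<in>Par J L Op. ch p) / ch s"
  proof -
    have "(\<Sum>p\<in>Par J L (J - Op). ch' p) = (\<Sum>p\<in>Par J L Op. ch' (\<lambda>x. s x - p x))"
      by (rule sum.reindex_bij_witness[of _ "\<lambda>p x. s x - p x" "\<lambda>p x. s x - p x"])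
         (auto simp: refl_par refl_par')
    also have "\<dots> = (\<Sum>p\<in>Par J L Op. ch p / ch s)"
      using mchar_diff[OF ch] mchar_nz[OF ch] by (intro sum.cong refl) (simp add: ch'_def)
    finally show ?thesis by (simp add: sum_divide_distrib)
  qed
  have fac: "1 / ch (V k) * (1 / (1 - ch' (V k))) = (-1) * (1 / (1 - ch (V k)))" if "k \<in> J" for k
  proof -
    have w0: "ch (V k) \<noteq> 0" "ch (V k) \<noteq> 1" using big[OF that] by auto
    then show ?thesis by (simp add: ch'_def field_simps)
  qed
  have p1: "(\<Prod>k\<in>J. 1 / ch (V k) * (1/(1 - ch' (V k)))) = (\<Prod>k\<in>J. 1 / ch (V k)) * (\<Prod>k\<in>J. 1/(1 - ch' (V k)))"
    by (rule prod.distrib)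
  have p2: "(\<Prod>k\<in>J. 1 / ch (V k)) = 1 / (\<Prod>k\<in>J. ch (V k))"
    by (simp add: prod_dividef)
  have p3: "(\<Prod>k\<in>J. 1 / ch (V k) * (1/(1 - ch' (V k)))) = (\<Prod>k\<in>J. (-1) * (1 / (1 - ch (V k))))"
    by (rule prod.cong[OF refl fac])
  have p4: "(\<Prod>k\<in>J. (-1) * (1 / (1 - ch (V k)))) = (-1)^card J * (\<Prod>k\<in>J. 1 / (1 - ch (V k)))"
    unfolding prod.distrib prod_constant ..
  have "(\<Sum>p\<in>Par J L (J - Op). ch' p) * (\<Prod>k\<in>J. 1/(1 - ch' (V k)))
      = (\<Sum>p\<in>Par J L Op. ch p) * (\<Prod>k\<in>J. 1 / ch (V k) * (1/(1 - ch' (V k))))"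
    unfolding sumeq chs p1 p2 by simp
  also have "\<dots> = (-1)^card J * ((\<Sum>p\<in>Par J L Op. ch p) * (\<Prod>k\<in>J. 1/(1 - ch (V k))))"
    unfolding p3 p4 by simp
  finally show ?thesis using H by (simp add: ch'_def)
qed


definition mono :: "nat \<Rightarrow> (nat \<Rightarrow> nat) \<Rightarrow> (nat \<Rightarrow> complex) \<Rightarrow> complex" where
  "mono N e v = (\<Prod>i<N. v i ^ e i)"

definition ispoly :: "nat \<Rightarrow> ((nat \<Rightarrow> complex) \<Rightarrow> complex) \<Rightarrow> bool" where
  "ispoly N f \<longleftrightarrow> (\<exists>p. is_mpoly N p \<and> (\<forall>v. f v = mpoly_eval N p v))"

lemma eval_superset:
  assumes "is_mpoly N p" "finite F" "{e. p e \<noteq> 0} \<subseteq> F"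
  shows "mpoly_eval N p v = (\<Sum>e\<in>F. p e * mono N e v)"
  unfolding mpoly_eval_def mono_def using assms
  by (intro sum.mono_neutral_left) (auto simp: is_mpoly_def)

lemma ispoly_const: "ispoly N (\<lambda>v. a)"
proof -
  define p where "p = (\<lambda>e::nat \<Rightarrow> nat. if e = (\<lambda>_. 0) then a else 0)"
  have mp: "is_mpoly N p" unfolding is_mpoly_def p_def
    by (auto intro: finite_subset[of _ "{\<lambda>_. 0}"])
  have "mpoly_eval N p v = (\<Sum>e\<in>{\<lambda>_. 0}. p e * mono N e v)" for v
    by (rule eval_superset[OF mp]) (auto simp: p_def)
  then show ?thesis unfolding ispoly_def using mp by (intro exI[of _ p]) (simp add: p_def mono_def)
qed

lemma ispoly_var: "i < N \<Longrightarrow> ispoly N (\<lambda>v. v i)"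
proof -
  assume i: "i < N"
  define u where "u = (\<lambda>j::nat. if j = i then 1 else (0::nat))"
  define p where "p = (\<lambda>e::nat \<Rightarrow> nat. if e = u then (1::complex) else 0)"
  have mp: "is_mpoly N p" unfolding is_mpoly_def p_def using i
    by (auto intro: finite_subset[of _ "{u}"] simp: u_def)
  have "mpoly_eval N p v = (\<Sum>e\<in>{u}. p e * mono N e v)" for v
    by (rule eval_superset[OF mp]) (auto simp: p_def)
  moreover have "mono N u v = v i" for v
  proof -
    have "mono N u v = (\<Prod>j<N. if j = i then v j else 1)" unfolding mono_def u_def
      by (intro prod.cong refl) auto
    also have "\<dots> = v i" using i by (simp add: prod.delta)
    finally show ?thesis .
  qed
  ultimately show ?thesis unfolding ispoly_def using mp by (intro exI[of _ p]) (simp add: p_def)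
qed

lemma ispoly_add: "ispoly N f \<Longrightarrow> ispoly N g \<Longrightarrow> ispoly N (\<lambda>v. f v + g v)"
proof -
  assume "ispoly N f" "ispoly N g"
  then obtain p q where p: "is_mpoly N p" "\<forall>v. f v = mpoly_eval N p v"
    and q: "is_mpoly N q" "\<forall>v. g v = mpoly_eval N q v" by (auto simp: ispoly_def)
  define r where "r = (\<lambda>e. p e + q e)"
  define F where "F = {e. p e \<noteq> 0} \<union> {e. q e \<noteq> 0}"
  have F: "finite F" using p q by (auto simp: F_def is_mpoly_def)
  have mr: "is_mpoly N r" unfolding is_mpoly_def
  proof
    show "finite {e. r e \<noteq> 0}" by (rule finite_subset[OF _ F]) (auto simp: r_def F_def)
    show "\<forall>e. r e \<noteq> 0 \<longrightarrow> (\<forall>i. N \<le> i \<longrightarrow> e i = 0)"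
    proof (intro allI impI)
      fix e i assume "r e \<noteq> 0" "N \<le> i"
      then have "p e \<noteq> 0 \<or> q e \<noteq> 0" by (auto simp: r_def)
      then show "e i = 0" using p(1) q(1) \<open>N \<le> i\<close> unfolding is_mpoly_def by blast
    qed
  qed
  have "mpoly_eval N r v = mpoly_eval N p v + mpoly_eval N q v" for v
  proof -
    have "mpoly_eval N r v = (\<Sum>e\<in>F. r e * mono N e v)"
      by (rule eval_superset[OF mr F]) (auto simp: r_def F_def)
    also have "\<dots> = (\<Sum>e\<in>F. p e * mono N e v) + (\<Sum>e\<in>F. q e * mono N e v)"
      by (simp add: r_def distrib_right sum.distrib)
    also have "\<dots> = mpoly_eval N p v + mpoly_eval N q v"
      using eval_superset[OF p(1) F] eval_superset[OF q(1) F] by (auto simp: F_def)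
    finally show ?thesis .
  qed
  then show ?thesis unfolding ispoly_def using mr p q by (intro exI[of _ r]) auto
qed

lemma mono_add: "mono N (\<lambda>i. e1 i + e2 i) v = mono N e1 v * mono N e2 v"
  by (simp add: mono_def power_add prod.distrib)

lemma ispoly_mult: "ispoly N f \<Longrightarrow> ispoly N g \<Longrightarrow> ispoly N (\<lambda>v. f v * g v)"
proof -
  assume "ispoly N f" "ispoly N g"
  then obtain p q where p: "is_mpoly N p" "\<forall>v. f v = mpoly_eval N p v"
    and q: "is_mpoly N q" "\<forall>v. g v = mpoly_eval N q v" by (auto simp: ispoly_def)
  define P where "P = {e. p e \<noteq> 0}"
  define Q where "Q = {e. q e \<noteq> 0}"
  have PQ: "finite P" "finite Q" using p q by (auto simp: P_def Q_def is_mpoly_def)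
  define pl where "pl = (\<lambda>(e1::nat\<Rightarrow>nat, e2::nat\<Rightarrow>nat). (\<lambda>i. e1 i + e2 i))"
  define r where "r e = (\<Sum>x\<in>{x\<in>P \<times> Q. pl x = e}. p (fst x) * q (snd x))" for e
  define F where "F = pl ` (P \<times> Q)"
  have F: "finite F" using PQ by (simp add: F_def)
  have ne: "\<exists>x. x \<in> P \<times> Q \<and> pl x = e" if "r e \<noteq> 0" for e
  proof (rule ccontr)
    assume "\<not> (\<exists>x. x \<in> P \<times> Q \<and> pl x = e)"
    then have "{x\<in>P \<times> Q. pl x = e} = {}" by blast
    then have "r e = 0" unfolding r_def by (simp only: sum.empty)
    then show False using that by simp
  qed
  have inF: "e \<in> F" if "r e \<noteq> 0" for e
    using ne[OF that] unfolding F_def by blast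
  have mr: "is_mpoly N r" unfolding is_mpoly_def
  proof
    show "finite {e. r e \<noteq> 0}"
    proof (rule finite_subset[OF _ F])
      show "{e. r e \<noteq> 0} \<subseteq> F"
        using inF by blast
    qed
    show "\<forall>e. r e \<noteq> 0 \<longrightarrow> (\<forall>i. N \<le> i \<longrightarrow> e i = 0)"
    proof (intro allI impI)
      fix e i assume "r e \<noteq> 0" "N \<le> i"
      then obtain x where x: "x \<in> P \<times> Q" "pl x = e" using ne by blast
      then show "e i = 0" using p(1) q(1) \<open>N \<le> i\<close> by (auto simp: is_mpoly_def P_def Q_def pl_def)
    qed
  qed
  have "mpoly_eval N r v = mpoly_eval N p v * mpoly_eval N q v" for v
  proof -
    have "mpoly_eval N r v = (\<Sum>e\<in>F. r e * mono N e v)"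
      by (rule eval_superset[OF mr F]) (use inF in blast)
    also have "\<dots> = (\<Sum>e\<in>F. \<Sum>x\<in>{x\<in>P \<times> Q. pl x = e}. p (fst x) * q (snd x) * mono N (pl x) v)"
      unfolding r_def by (intro sum.cong refl) (auto simp: sum_distrib_right)
    also have "\<dots> = (\<Sum>x\<in>P \<times> Q. p (fst x) * q (snd x) * mono N (pl x) v)"
      unfolding F_def by (rule sum.image_gen[symmetric]) (use PQ in simp)
    also have "\<dots> = (\<Sum>x\<in>P \<times> Q. (p (fst x) * mono N (fst x) v) * (q (snd x) * mono N (snd x) v))"
      by (intro sum.cong refl) (auto simp: pl_def mono_add)
    also have "\<dots> = (\<Sum>e\<in>P. p e * mono N e v) * (\<Sum>e\<in>Q. q e * mono N e v)"
      by (simp add: sum_product sum.cartesian_product case_prod_beta)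
    also have "\<dots> = mpoly_eval N p v * mpoly_eval N q v"
      by (simp add: mpoly_eval_def mono_def P_def Q_def)
    finally show ?thesis .
  qed
  then show ?thesis unfolding ispoly_def using mr p q by (intro exI[of _ r]) auto
qed

lemma ispoly_sum: "finite I \<Longrightarrow> (\<And>i. i \<in> I \<Longrightarrow> ispoly N (f i)) \<Longrightarrow> ispoly N (\<lambda>v. \<Sum>i\<in>I. f i v)"
  by (induction I rule: finite_induct) (auto intro: ispoly_add ispoly_const)

lemma ispoly_prod: "finite I \<Longrightarrow> (\<And>i. i \<in> I \<Longrightarrow> ispoly N (f i)) \<Longrightarrow> ispoly N (\<lambda>v. \<Prod>i\<in>I. f i v)"
  by (induction I rule: finite_induct) (auto intro: ispoly_mult ispoly_const)

lemma ispoly_power: "ispoly N f \<Longrightarrow> ispoly N (\<lambda>v. f v ^ k)"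
  by (induction k) (auto intro: ispoly_mult ispoly_const)


definition mprod :: "nat \<Rightarrow> (nat \<Rightarrow> complex) \<Rightarrow> complex" where "mprod N v = (\<Prod>i<N. v i)"

definition lp :: "nat \<Rightarrow> ((nat \<Rightarrow> complex) \<Rightarrow> complex) \<Rightarrow> bool" where
  "lp N f \<longleftrightarrow> (\<exists>g d. ispoly N g \<and> (\<forall>v. (\<forall>i<N. v i \<noteq> 0) \<longrightarrow> f v = g v / mprod N v ^ d))"

lemma ispoly_mprod: "ispoly N (mprod N)"
  unfolding mprod_def by (rule ispoly_prod) (auto intro: ispoly_var)

lemma mprod_nz: "(\<forall>i<N. v i \<noteq> 0) \<Longrightarrow> mprod N v \<noteq> 0"
  by (simp add: mprod_def)

lemma lp_poly: "ispoly N f \<Longrightarrow> lp N f"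
  unfolding lp_def by (intro exI[of _ f] exI[of _ 0]) auto

lemma lp_const: "lp N (\<lambda>v. a)"
  by (rule lp_poly[OF ispoly_const])

lemma lp_var: "i < N \<Longrightarrow> lp N (\<lambda>v. v i)"
  by (rule lp_poly[OF ispoly_var])

lemma lp_add: "lp N f \<Longrightarrow> lp N g \<Longrightarrow> lp N (\<lambda>v. f v + g v)"
proof -
  assume "lp N f" "lp N g"
  then obtain g1 d1 g2 d2 where 1: "ispoly N g1" "\<forall>v. (\<forall>i<N. v i \<noteq> 0) \<longrightarrow> f v = g1 v / mprod N v ^ d1"
    and 2: "ispoly N g2" "\<forall>v. (\<forall>i<N. v i \<noteq> 0) \<longrightarrow> g v = g2 v / mprod N v ^ d2" by (auto simp: lp_def)
  have p: "ispoly N (\<lambda>v. g1 v * mprod N v ^ d2 + g2 v * mprod N v ^ d1)"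
    by (intro ispoly_add ispoly_mult ispoly_power 1 2 ispoly_mprod)
  have "f v + g v = (g1 v * mprod N v ^ d2 + g2 v * mprod N v ^ d1) / mprod N v ^ (d1 + d2)"
    if "\<forall>i<N. v i \<noteq> 0" for v
    using 1(2) 2(2) that mprod_nz[OF that] by (simp add: field_simps power_add)
  then show ?thesis unfolding lp_def using p by blast
qed

lemma lp_mult: "lp N f \<Longrightarrow> lp N g \<Longrightarrow> lp N (\<lambda>v. f v * g v)"
proof -
  assume "lp N f" "lp N g"
  then obtain g1 d1 g2 d2 where 1: "ispoly N g1" "\<forall>v. (\<forall>i<N. v i \<noteq> 0) \<longrightarrow> f v = g1 v / mprod N v ^ d1"
    and 2: "ispoly N g2" "\<forall>v. (\<forall>i<N. v i \<noteq> 0) \<longrightarrow> g v = g2 v / mprod N v ^ d2" by (auto simp: lp_def)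
  have p: "ispoly N (\<lambda>v. g1 v * g2 v)" by (intro ispoly_mult 1 2)
  have "f v * g v = (g1 v * g2 v) / mprod N v ^ (d1 + d2)" if "\<forall>i<N. v i \<noteq> 0" for v
    using 1(2) 2(2) that mprod_nz[OF that] by (simp add: field_simps power_add)
  then show ?thesis unfolding lp_def using p by blast
qed

lemma lp_sum: "finite I \<Longrightarrow> (\<And>i. i \<in> I \<Longrightarrow> lp N (f i)) \<Longrightarrow> lp N (\<lambda>v. \<Sum>i\<in>I. f i v)"
  by (induction I rule: finite_induct) (auto intro: lp_add lp_const)

lemma lp_prod: "finite I \<Longrightarrow> (\<And>i. i \<in> I \<Longrightarrow> lp N (f i)) \<Longrightarrow> lp N (\<lambda>v. \<Prod>i\<in>I. f i v)"
  by (induction I rule: finite_induct) (auto intro: lp_mult lp_const)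

lemma lp_power: "lp N f \<Longrightarrow> lp N (\<lambda>v. f v ^ k)"
  by (induction k) (auto intro: lp_mult lp_const)

lemma lp_diff: "lp N f \<Longrightarrow> lp N g \<Longrightarrow> lp N (\<lambda>v. f v - g v)"
proof -
  assume "lp N f" "lp N g"
  then have "lp N (\<lambda>v. f v + (-1) * g v)" by (intro lp_add lp_mult lp_const)
  then show ?thesis by simp
qed

lemma lp_inv_var: "i < N \<Longrightarrow> lp N (\<lambda>v. inverse (v i))"
proof -
  assume i: "i < N"
  have p: "ispoly N (\<lambda>v. \<Prod>j\<in>{..<N} - {i}. v j)"
    by (rule ispoly_prod) (auto intro: ispoly_var)
  have "inverse (v i) = (\<Prod>j\<in>{..<N} - {i}. v j) / mprod N v ^ 1" if "\<forall>j<N. v j \<noteq> 0" for v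
  proof -
    have "mprod N v = v i * (\<Prod>j\<in>{..<N} - {i}. v j)"
      unfolding mprod_def using i by (simp add: prod.remove)
    then show ?thesis using that i by (simp add: field_simps)
  qed
  then show ?thesis unfolding lp_def using p by blast
qed

lemma lp_powi_var: "i < N \<Longrightarrow> lp N (\<lambda>v. v i powi e)"
proof -
  assume i: "i < N"
  have "lp N (\<lambda>v. if e \<ge> 0 then v i ^ nat e else inverse (v i) ^ nat (-e))"
  proof (cases "e \<ge> 0")
    case True then show ?thesis by (simp add: lp_power lp_var[OF i])
  next
    case False then show ?thesis by (simp add: lp_power lp_inv_var[OF i])
  qed
  then show ?thesis by (simp add: power_int_def)
qed

lemma frac_sum:
  assumes I: "finite I" and a: "\<And>i. i \<in> I \<Longrightarrow> lp N (a i)" and b: "\<And>i. i \<in> I \<Longrightarrow> lp N (b i)"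
  shows "\<exists>P Q. ispoly N P \<and> ispoly N Q \<and> (\<forall>v. (\<forall>j<N. v j \<noteq> 0) \<and> (\<forall>i\<in>I. b i v \<noteq> 0) \<longrightarrow>
     Q v \<noteq> 0 \<and> (\<Sum>i\<in>I. a i v / b i v) = P v / Q v)"
  using I a b
proof (induction I rule: finite_induct)
  case empty
  then show ?case by (intro exI[of _ "\<lambda>v. 0"] exI[of _ "\<lambda>v. 1"]) (auto intro: ispoly_const)
next
  case (insert x I)
  obtain P Q where PQ: "ispoly N P" "ispoly N Q" "\<forall>v. (\<forall>j<N. v j \<noteq> 0) \<and> (\<forall>i\<in>I. b i v \<noteq> 0) \<longrightarrow>
     Q v \<noteq> 0 \<and> (\<Sum>i\<in>I. a i v / b i v) = P v / Q v" using insert by auto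
  obtain ga da where A: "ispoly N ga" "\<forall>v. (\<forall>i<N. v i \<noteq> 0) \<longrightarrow> a x v = ga v / mprod N v ^ da"
    using insert.prems(1)[of x] by (auto simp: lp_def)
  obtain gb db where B: "ispoly N gb" "\<forall>v. (\<forall>i<N. v i \<noteq> 0) \<longrightarrow> b x v = gb v / mprod N v ^ db"
    using insert.prems(2)[of x] by (auto simp: lp_def)
  define P' where "P' v = ga v * mprod N v ^ db * Q v + P v * (gb v * mprod N v ^ da)" for v
  define Q' where "Q' v = gb v * mprod N v ^ da * Q v" for v
  have p: "ispoly N P'" "ispoly N Q'" unfolding P'_def Q'_def
    by (intro ispoly_add ispoly_mult ispoly_power PQ A B ispoly_mprod)+
  have "\<forall>v. (\<forall>j<N. v j \<noteq> 0) \<and> (\<forall>i\<in>insert x I. b i v \<noteq> 0) \<longrightarrow>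
     Q' v \<noteq> 0 \<and> (\<Sum>i\<in>insert x I. a i v / b i v) = P' v / Q' v"
  proof (intro allI impI)
    fix v assume v: "(\<forall>j<N. v j \<noteq> 0) \<and> (\<forall>i\<in>insert x I. b i v \<noteq> 0)"
    have m: "mprod N v \<noteq> 0" using mprod_nz v by blast
    have Qv: "Q v \<noteq> 0" "(\<Sum>i\<in>I. a i v / b i v) = P v / Q v" using PQ(3) v by auto
    have bx: "b x v \<noteq> 0" using v by auto
    have gb: "gb v \<noteq> 0" using bx B(2) v by auto
    have Q': "Q' v \<noteq> 0" using m Qv gb by (simp add: Q'_def)
    have "a x v / b x v = (ga v * mprod N v ^ db) / (gb v * mprod N v ^ da)"
      using A(2) B(2) v m gb by (simp add: field_simps)
    then have "(\<Sum>i\<in>insert x I. a i v / b i v) = P' v / Q' v"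
      using insert.hyps Qv m gb by (simp add: P'_def Q'_def field_simps)
    then show "Q' v \<noteq> 0 \<and> (\<Sum>i\<in>insert x I. a i v / b i v) = P' v / Q' v" using Q' by blast
  qed
  then show ?case using p by blast
qed

lemma ispoly_mpoly: "ispoly N f \<Longrightarrow> \<exists>p. is_mpoly N p \<and> (\<forall>v. f v = mpoly_eval N p v)"
  by (simp add: ispoly_def)


definition E0 :: "nat \<Rightarrow> nat \<Rightarrow> int" where "E0 k = (\<lambda>x. if x = k then 1 else 0)"
definition L0 :: "nat \<Rightarrow> nat \<Rightarrow> real" where "L0 k = (\<lambda>x. if x = k then 1 else 0)"

lemma ap_L0: "finite J \<Longrightarrow> k \<in> J \<Longrightarrow> ap J (L0 k) z = z k"
proof -
  assume J: "finite J" and k: "k \<in> J"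
  have "ap J (L0 k) z = (\<Sum>i\<in>J. if i = k then z k else 0)"
    unfolding ap_def L0_def by (intro sum.cong refl) auto
  then show ?thesis using J k by simp
qed

lemma scone_E0: "finite J \<Longrightarrow> scone J E0 L0"
  unfolding scone_def
proof (intro conjI ballI allI)
  assume J: "finite J"
  fix k assume "k \<in> J" then show "supp_on J (E0 k)" by (auto simp: supp_on_def E0_def)
next
  assume J: "finite J"
  fix k j assume "k \<in> J" "j \<in> J"
  then show "ap J (L0 k) (rv (E0 j)) = (if k = j then 1 else 0)"
    using J by (simp add: ap_L0 rv_def E0_def)
next
  assume J: "finite J"
  fix z :: "nat \<Rightarrow> real" and i assume i: "i \<in> J"
  have "(\<Sum>k\<in>J. ap J (L0 k) z * rv (E0 k) i) = (\<Sum>k\<in>J. if k = i then z k else 0)"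
    using J by (intro sum.cong refl) (auto simp: ap_L0 rv_def E0_def)
  also have "\<dots> = z i" using J i by simp
  finally show "z i = (\<Sum>k\<in>J. ap J (L0 k) z * rv (E0 k) i)" by simp
qed

lemma nonneg_E0: "nonneg J E0"
  by (simp add: nonneg_def E0_def)

lemma QEX:
  assumes J: "finite J" and G: "finite G" and nz: "\<And>g. g \<in> G \<Longrightarrow> \<exists>x\<in>J. g x \<noteq> 0"
  shows "\<exists>q. (\<forall>k\<in>J. q k \<noteq> 0 \<and> (q k > 0 \<longleftrightarrow> sg k)) \<and> (\<forall>g\<in>G. ap J g q \<noteq> 0)"
proof -
  define sn where "sn k = (if sg k then 1 else (-1::real))" for k
  define P where "P g = (\<Sum>k\<in>J. monom (g k * sn k) (Suc k))" for g
  have Pnz: "P g \<noteq> 0" if g: "g \<in> G" for g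
  proof -
    obtain x where x: "x \<in> J" "g x \<noteq> 0" using nz[OF g] by blast
    have "coeff (P g) (Suc x) = (\<Sum>k\<in>J. if Suc k = Suc x then g k * sn k else 0)"
      by (simp add: P_def coeff_sum)
    also have "\<dots> = g x * sn x" using J x by (simp add: if_distrib cong: if_cong)
    finally have "coeff (P g) (Suc x) \<noteq> 0" using x by (simp add: sn_def)
    then show ?thesis by auto
  qed
  define R where "R = (\<Union>g\<in>G. {x. poly (P g) x = 0})"
  have R: "finite R" unfolding R_def using G Pnz by (auto intro!: poly_roots_finite)
  define t where "t = Max (insert 0 R) + 1"
  have t: "t > 0" "t \<notin> R"
  proof -
    have "0 \<le> Max (insert 0 R)" using R by simp
    then show "t > 0" by (simp add: t_def)
    show "t \<notin> R"
    proof
      assume "t \<in> R"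
      then have "t \<le> Max (insert 0 R)" using R by simp
      then show False by (simp add: t_def)
    qed
  qed
  define q where "q k = sn k * t ^ Suc k" for k
  show ?thesis
  proof (intro exI[of _ q] conjI ballI)
    fix k assume "k \<in> J"
    show "q k \<noteq> 0" using t by (simp add: q_def sn_def)
    have "t ^ Suc k > 0" using t by simp
    then show "0 < q k \<longleftrightarrow> sg k" using t(1) unfolding q_def sn_def by (cases "sg k") (auto simp del: power_Suc)
  next
    fix g assume g: "g \<in> G"
    have "ap J g q = poly (P g) t"
      by (simp add: ap_def q_def P_def poly_sum poly_monom mult.assoc)
    then show "ap J g q \<noteq> 0" using t g by (auto simp: R_def)
  qed
qed

lemma ap_uminus: "ap J g (\<lambda>x. - q x) = - ap J g q"
  by (simp add: ap_def sum_negf)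

lemma face_decomp:
  assumes J: "finite J"
  shows "\<exists>Ts q. (\<forall>k\<in>J. q k \<noteq> 0 \<and> (q k > 0 \<longleftrightarrow> sg k)) \<and>
     (\<forall>T\<in>set Ts. scone J (fst T) (snd T) \<and> nonneg J (fst T) \<and> (\<forall>b\<in>set B. onesided J b (fst T)) \<and>
        (\<forall>k\<in>J. ap J (snd T k) q \<noteq> 0)) \<and>
     (\<forall>z. cnt J q z Ts = (if inq J L0 q z then 1 else 0)) \<and>
     (\<forall>z. cnt J (\<lambda>x. - q x) z Ts = (if inq J L0 (\<lambda>x. - q x) z then 1 else 0))"
proof -
  obtain Ts G where TG: "decomp J L0 Ts G" "\<forall>T\<in>set Ts. nonneg J (fst T) \<and> (\<forall>b\<in>set B. onesided J b (fst T))"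
    using cut_all[OF J scone_E0[OF J] nonneg_E0] by blast
  define G' where "G' = G \<union> (\<Union>T\<in>set Ts. snd T ` J)"
  have fin: "finite G'" using TG(1) J by (auto simp: decomp_def G'_def)
  have nz: "\<exists>x\<in>J. g x \<noteq> 0" if gG: "g \<in> G'" for g
  proof (cases "g \<in> G")
    case True then show ?thesis using TG(1) by (auto simp: decomp_def)
  next
    case False
    then obtain T k where T: "T \<in> set Ts" "k \<in> J" "g = snd T k" using gG False unfolding G'_def by blast
    have "scone J (fst T) (snd T)" using TG(1) T by (auto simp: decomp_def)
    then have "ap J (snd T k) (rv (fst T k)) = 1" using T by (auto simp: scone_def)
    then show ?thesis using T(3) by (intro ap_nonzero[of _ _ "rv (fst T k)"]) simp
  qed
  obtain q where q: "\<forall>k\<in>J. q k \<noteq> 0 \<and> (q k > 0 \<longleftrightarrow> sg k)" "\<forall>g\<in>G'. ap J g q \<noteq> 0"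
    using QEX[OF J fin nz] by blast
  have qG: "\<forall>g\<in>G. ap J g q \<noteq> 0" "\<forall>g\<in>G. ap J g (\<lambda>x. - q x) \<noteq> 0"
    using q(2) by (auto simp: G'_def ap_uminus)
  have c1: "\<forall>z. cnt J q z Ts = (if inq J L0 q z then 1 else 0)"
    using TG(1) qG(1) unfolding decomp_def by blast
  have c2: "\<forall>z. cnt J (\<lambda>x. - q x) z Ts = (if inq J L0 (\<lambda>x. - q x) z then 1 else 0)"
    using TG(1) qG(2) unfolding decomp_def by blast
  have "\<forall>T\<in>set Ts. scone J (fst T) (snd T) \<and> nonneg J (fst T) \<and> (\<forall>b\<in>set B. onesided J b (fst T)) \<and>
        (\<forall>k\<in>J. ap J (snd T k) q \<noteq> 0)"
  proof -
    have "\<forall>T\<in>set Ts. \<forall>k\<in>J. ap J (snd T k) q \<noteq> 0" using q(2) unfolding G'_def by blast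
    then show ?thesis using TG unfolding decomp_def by blast
  qed
  then show ?thesis using q(1) c1 c2 by blast
qed


lemma sum_over_decomp:
  fixes f :: "(nat \<Rightarrow> int) \<Rightarrow> complex"
  assumes cnt: "\<forall>z. cnt J q z Ts = (if inq J L0 q z then 1 else 0)"
    and each: "\<And>k. k < length Ts \<Longrightarrow> (f has_sum v k) {z. inq J (snd (Ts!k)) q z}"
  shows "(f has_sum (\<Sum>k<length Ts. v k)) {z. inq J L0 q z}"
proof -
  have c: "card {k. k < length Ts \<and> inq J (snd (Ts!k)) q z} = (if inq J L0 q z then 1 else 0)" for z
    using cnt unfolding cnt_def length_filter_conv_card by simp
  have disj: "{z. inq J (snd (Ts!k)) q z} \<inter> {z. inq J (snd (Ts!k')) q z} = {}"
    if "k \<in> {..<length Ts}" "k' \<in> {..<length Ts}" "k \<noteq> k'" for k k'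
  proof (rule ccontr)
    assume "{z. inq J (snd (Ts!k)) q z} \<inter> {z. inq J (snd (Ts!k')) q z} \<noteq> {}"
    then obtain z where z: "inq J (snd (Ts!k)) q z" "inq J (snd (Ts!k')) q z" by blast
    have "{k, k'} \<subseteq> {k. k < length Ts \<and> inq J (snd (Ts!k)) q z}" using that z by auto
    then have "card {k, k'} \<le> card {k. k < length Ts \<and> inq J (snd (Ts!k)) q z}"
      by (intro card_mono) auto
    then show False using c[of z] that by (auto split: if_splits)
  qed
  have un: "(\<Union>k\<in>{..<length Ts}. {z. inq J (snd (Ts!k)) q z}) = {z. inq J L0 q z}"
  proof (intro set_eqI iffI)
    fix z assume "z \<in> (\<Union>k\<in>{..<length Ts}. {z. inq J (snd (Ts!k)) q z})"
    then obtain k where "k < length Ts" "inq J (snd (Ts!k)) q z" by auto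
    then have "{k. k < length Ts \<and> inq J (snd (Ts!k)) q z} \<noteq> {}" by auto
    then have "card {k. k < length Ts \<and> inq J (snd (Ts!k)) q z} \<noteq> 0" by simp
    then show "z \<in> {z. inq J L0 q z}" using c[of z] by (auto split: if_splits)
  next
    fix z assume "z \<in> {z. inq J L0 q z}"
    then have "card {k. k < length Ts \<and> inq J (snd (Ts!k)) q z} = 1" using c[of z] by simp
    then have "{k. k < length Ts \<and> inq J (snd (Ts!k)) q z} \<noteq> {}" by (metis card.empty zero_neq_one)
    then show "z \<in> (\<Union>k\<in>{..<length Ts}. {z. inq J (snd (Ts!k)) q z})" by auto
  qed
  show ?thesis using sum_has_sum[of "{..<length Ts}" f "\<lambda>k. {z. inq J (snd (Ts!k)) q z}" v] each disj
    unfolding un by auto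
qed

lemma inq_SO:
  assumes "\<forall>k\<in>J. ap J (L k) q \<noteq> 0"
  shows "{z. inq J L q z} = SO J L {k\<in>J. ap J (L k) q < 0}"
    and "{z. inq J L (\<lambda>x. - q x) z} = SO J L (J - {k\<in>J. ap J (L k) q < 0})"
proof -
  have p1: "pos a b \<longleftrightarrow> (if b < 0 then a > 0 else a \<ge> 0)" if "b \<noteq> 0" for a b :: real
    using that by (auto simp: pos_def)
  have p2: "pos a (-b) \<longleftrightarrow> (if b < 0 then a \<ge> 0 else a > 0)" if "b \<noteq> 0" for a b :: real
    using that by (auto simp: pos_def)
  show "{z. inq J L q z} = SO J L {k\<in>J. ap J (L k) q < 0}"
    using assms by (auto simp: inq_def SO_def p1)
  show "{z. inq J L (\<lambda>x. - q x) z} = SO J L (J - {k\<in>J. ap J (L k) q < 0})"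
    using assms by (auto simp: inq_def SO_def p2 ap_uminus)
qed

lemma closed_rep:
  assumes S: "scone J V L" and z: "\<forall>k\<in>J. ap J (L k) (rv z) \<ge> 0"
  shows "real_of_int (dt J b z) = (\<Sum>k\<in>J. ap J (L k) (rv z) * real_of_int (dt J b (V k)))"
proof -
  have "real_of_int (dt J b z) = (\<Sum>x\<in>J. real_of_int (b x) * rv z x)" by (simp add: dt_def rv_def)
  also have "\<dots> = (\<Sum>x\<in>J. real_of_int (b x) * (\<Sum>k\<in>J. ap J (L k) (rv z) * rv (V k) x))"
    using S by (intro sum.cong refl) (auto simp: scone_def)
  also have "\<dots> = (\<Sum>x\<in>J. \<Sum>k\<in>J. ap J (L k) (rv z) * (real_of_int (b x) * rv (V k) x))"
    by (simp add: sum_distrib_left mult.left_commute)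
  also have "\<dots> = (\<Sum>k\<in>J. \<Sum>x\<in>J. ap J (L k) (rv z) * (real_of_int (b x) * rv (V k) x))"
    by (rule sum.swap)
  also have "\<dots> = (\<Sum>k\<in>J. ap J (L k) (rv z) * real_of_int (dt J b (V k)))"
    by (simp add: sum_distrib_left dt_def rv_def)
  finally show ?thesis .
qed

lemma closed_dt_nonneg:
  assumes S: "scone J V L" and z: "\<forall>k\<in>J. ap J (L k) (rv z) \<ge> 0" and b: "\<forall>k\<in>J. dt J b (V k) \<ge> 0"
  shows "dt J b z \<ge> 0"
proof -
  have "real_of_int (dt J b z) \<ge> 0" unfolding closed_rep[OF S z]
    using z b by (intro sum_nonneg mult_nonneg_nonneg) auto
  then show ?thesis by simp
qed

lemma closed_nonneg:
  assumes S: "scone J V L" and N: "nonneg J V" and z: "\<forall>k\<in>J. ap J (L k) (rv z) \<ge> 0" and x: "x \<in> J"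
  shows "z x \<ge> 0"
proof -
  have "rv z x = (\<Sum>k\<in>J. ap J (L k) (rv z) * rv (V k) x)" using S x by (auto simp: scone_def)
  also have "\<dots> \<ge> 0" using z N by (intro sum_nonneg mult_nonneg_nonneg) (auto simp: nonneg_def rv_def)
  finally show ?thesis by (simp add: rv_def)
qed

definition Bl :: "(nat \<Rightarrow> nat \<Rightarrow> nat \<Rightarrow> int) \<Rightarrow> nat \<Rightarrow> nat \<Rightarrow> (nat \<Rightarrow> int) list" where
  "Bl c s t = map (\<lambda>(\<sigma>, \<tau>, \<tau>'). (\<lambda>x. c \<sigma> \<tau>' x - c \<sigma> \<tau> x)) (List.product [0..<s] (List.product [0..<t] [0..<t]))"

lemma Bl_mem: "\<sigma> < s \<Longrightarrow> \<tau> < t \<Longrightarrow> \<tau>' < t \<Longrightarrow> (\<lambda>x. c \<sigma> \<tau>' x - c \<sigma> \<tau> x) \<in> set (Bl c s t)"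
  unfolding Bl_def set_map by (rule image_eqI[of _ _ "(\<sigma>, \<tau>, \<tau>')"]) auto

lemma dt_diff: "dt J (\<lambda>x. f x - g x) v = dt J f v - dt J g v"
  by (simp add: dt_def sum_subtractf algebra_simps)

lemma tau_choice:
  assumes J: "finite J" and os: "\<forall>b\<in>set (Bl c s t). onesided J b V" and t: "t \<ge> 1" and \<sigma>: "\<sigma> < s"
  shows "\<exists>\<tau>0<t. \<forall>\<tau><t. \<forall>k\<in>J. dt J (c \<sigma> \<tau>0) (V k) \<le> dt J (c \<sigma> \<tau>) (V k)"
proof -
  define F where "F \<tau> = (\<Sum>k\<in>J. dt J (c \<sigma> \<tau>) (V k))" for \<tau>
  have ne: "F ` {..<t} \<noteq> {}" using t by (auto simp: lessThan_empty_iff)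
  obtain \<tau>0 where \<tau>0': "\<tau>0 \<in> {..<t}" "F \<tau>0 = Min (F ` {..<t})"
    using Min_in[OF finite_imageI[OF finite_lessThan] ne] by auto
  have \<tau>0: "\<tau>0 \<in> {..<t}" "\<forall>\<tau>\<in>{..<t}. F \<tau>0 \<le> F \<tau>"
    using \<tau>0' by auto
  show ?thesis
  proof (intro exI[of _ \<tau>0] conjI allI impI ballI)
    show "\<tau>0 < t" using \<tau>0 by simp
    fix \<tau> k assume \<tau>: "\<tau> < t" and k: "k \<in> J"
    have o: "onesided J (\<lambda>x. c \<sigma> \<tau> x - c \<sigma> \<tau>0 x) V" using os Bl_mem[OF \<sigma> _ \<tau>, of \<tau>0] \<tau>0 by auto
    show "dt J (c \<sigma> \<tau>0) (V k) \<le> dt J (c \<sigma> \<tau>) (V k)"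
    proof (cases "\<forall>k\<in>J. dt J (\<lambda>x. c \<sigma> \<tau> x - c \<sigma> \<tau>0 x) (V k) \<ge> 0")
      case True
      then show ?thesis using k by (auto simp: dt_diff)
    next
      case False
      then have le: "\<forall>k\<in>J. dt J (c \<sigma> \<tau>) (V k) - dt J (c \<sigma> \<tau>0) (V k) \<le> 0"
        using o by (auto simp: onesided_def dt_diff)
      have "F \<tau> - F \<tau>0 = (\<Sum>k\<in>J. dt J (c \<sigma> \<tau>) (V k) - dt J (c \<sigma> \<tau>0) (V k))"
        by (simp add: F_def sum_subtractf)
      moreover have "F \<tau> - F \<tau>0 \<ge> 0" using \<tau>0 \<tau> by auto
      ultimately have "(\<Sum>k\<in>J. dt J (c \<sigma> \<tau>0) (V k) - dt J (c \<sigma> \<tau>) (V k)) \<le> 0"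
        by (simp add: sum_subtractf)
      moreover have "\<forall>k\<in>J. dt J (c \<sigma> \<tau>0) (V k) - dt J (c \<sigma> \<tau>) (V k) \<ge> 0" using le by auto
      ultimately have "\<forall>k\<in>J. dt J (c \<sigma> \<tau>0) (V k) - dt J (c \<sigma> \<tau>) (V k) = 0"
        using sum_nonneg_eq_0_iff[OF J, of "\<lambda>k. dt J (c \<sigma> \<tau>0) (V k) - dt J (c \<sigma> \<tau>) (V k)"]
        by (metis (no_types, lifting) antisym sum_nonneg)
      then show ?thesis using k by auto
    qed
  qed
qed


definition chT :: "(nat \<Rightarrow> complex) \<Rightarrow> (nat \<Rightarrow> complex) \<Rightarrow> nat set \<Rightarrow> (nat \<Rightarrow> nat \<Rightarrow> nat \<Rightarrow> int) \<Rightarrow> nat \<Rightarrow>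
    (nat \<Rightarrow> nat) \<Rightarrow> (nat \<Rightarrow> int) \<Rightarrow> complex" where
  "chT X Y J c s tau z = (\<Prod>\<rho>\<in>J. X \<rho> powi z \<rho>) * (\<Prod>\<sigma><s. Y \<sigma> powi dt J (c \<sigma> (tau \<sigma>)) z)"

lemma dt_add: "dt J b (\<lambda>x. z x + w x) = dt J b z + dt J b w"
  by (simp add: dt_def sum.distrib algebra_simps)

lemma mchar_chT:
  assumes "\<forall>\<rho>\<in>J. X \<rho> \<noteq> 0" "\<forall>\<sigma><s. Y \<sigma> \<noteq> 0"
  shows "mchar (chT X Y J c s tau)"
  unfolding mchar_def chT_def
proof (intro conjI allI)
  fix z w :: "nat \<Rightarrow> int"
  have "(\<Prod>\<rho>\<in>J. X \<rho> powi (z \<rho> + w \<rho>)) = (\<Prod>\<rho>\<in>J. X \<rho> powi z \<rho> * X \<rho> powi w \<rho>)"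
    using assms(1) by (intro prod.cong refl) (simp add: power_int_add)
  moreover have "(\<Prod>\<sigma><s. Y \<sigma> powi dt J (c \<sigma> (tau \<sigma>)) (\<lambda>x. z x + w x)) =
      (\<Prod>\<sigma><s. Y \<sigma> powi dt J (c \<sigma> (tau \<sigma>)) z * Y \<sigma> powi dt J (c \<sigma> (tau \<sigma>)) w)"
    using assms(2) by (intro prod.cong refl) (simp add: dt_add power_int_add)
  ultimately show "(\<Prod>\<rho>\<in>J. X \<rho> powi (z \<rho> + w \<rho>)) * (\<Prod>\<sigma><s. Y \<sigma> powi dt J (c \<sigma> (tau \<sigma>)) (\<lambda>x. z x + w x)) =
    (\<Prod>\<rho>\<in>J. X \<rho> powi z \<rho>) * (\<Prod>\<sigma><s. Y \<sigma> powi dt J (c \<sigma> (tau \<sigma>)) z) *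
    ((\<Prod>\<rho>\<in>J. X \<rho> powi w \<rho>) * (\<Prod>\<sigma><s. Y \<sigma> powi dt J (c \<sigma> (tau \<sigma>)) w))"
    by (simp add: prod.distrib mult_ac)
next
  show "(\<Prod>\<rho>\<in>J. X \<rho> powi 0) * (\<Prod>\<sigma><s. Y \<sigma> powi dt J (c \<sigma> (tau \<sigma>)) (\<lambda>x. 0)) = 1"
    by (simp add: dt_def)
qed

lemma Zterm_inverse:
  "Zterm c n s t (\<lambda>\<rho>. inverse (X \<rho>)) (\<lambda>\<sigma>. inverse (Y \<sigma>)) r = inverse (Zterm c n s t X Y r)"
proof -
  have "(\<Prod>\<rho><n. inverse (X \<rho>) ^ r \<rho>) = inverse (\<Prod>\<rho><n. X \<rho> ^ r \<rho>)"
    using prod_inversef[of "\<lambda>\<rho>. X \<rho> ^ r \<rho>" "{..<n}"] by (simp add: o_def power_inverse)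
  moreover have "(\<Prod>\<sigma><s. inverse (Y \<sigma>) powi m \<sigma>) = inverse (\<Prod>\<sigma><s. Y \<sigma> powi m \<sigma>)" for m
    using prod_inversef[of "\<lambda>\<sigma>. Y \<sigma> powi m \<sigma>" "{..<s}"] by (simp add: o_def power_int_inverse)
  ultimately show ?thesis by (simp add: Zterm_def)
qed

lemma Zterm_chT:
  assumes J: "finite J" "J \<subseteq> {..<n}" and S: "scone J V L" and N: "nonneg J V"
    and z: "supp_on J z" "\<forall>k\<in>J. ap J (L k) (rv z) \<ge> 0"
    and tau: "\<forall>\<sigma><s. tau \<sigma> < t \<and> (\<forall>\<tau><t. \<forall>k\<in>J. dt J (c \<sigma> (tau \<sigma>)) (V k) \<le> dt J (c \<sigma> \<tau>) (V k))"
  shows "Zterm c n s t X Y (\<lambda>i. nat (z i)) = chT X Y J c s tau z"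
proof -
  have zn: "z x \<ge> 0" for x
  proof (cases "x \<in> J")
    case True then show ?thesis using closed_nonneg[OF S N z(2)] by blast
  next
    case False then show ?thesis using z(1) by (simp add: supp_on_def)
  qed
  have z0: "x \<notin> J \<Longrightarrow> z x = 0" for x using z(1) by (simp add: supp_on_def)
  have p1: "(\<Prod>\<rho><n. X \<rho> ^ nat (z \<rho>)) = (\<Prod>\<rho>\<in>J. X \<rho> powi z \<rho>)"
  proof -
    have "(\<Prod>\<rho><n. X \<rho> ^ nat (z \<rho>)) = (\<Prod>\<rho>\<in>J. X \<rho> ^ nat (z \<rho>))"
      using J z0 by (intro prod.mono_neutral_right) auto
    also have "\<dots> = (\<Prod>\<rho>\<in>J. X \<rho> powi z \<rho>)"
      using zn by (intro prod.cong refl) (metis int_nat_eq power_int_of_nat)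
    finally show ?thesis .
  qed
  have lf: "linform c n \<sigma> \<tau> (\<lambda>i. nat (z i)) = dt J (c \<sigma> \<tau>) z" for \<sigma> \<tau>
  proof -
    have "linform c n \<sigma> \<tau> (\<lambda>i. nat (z i)) = (\<Sum>\<rho>\<in>J. c \<sigma> \<tau> \<rho> * int (nat (z \<rho>)))"
      unfolding linform_def using J z0 by (intro sum.mono_neutral_right) auto
    also have "\<dots> = dt J (c \<sigma> \<tau>) z" using zn by (simp add: dt_def)
    finally show ?thesis .
  qed
  have mn: "Min ((\<lambda>\<tau>. linform c n \<sigma> \<tau> (\<lambda>i. nat (z i))) ` {..<t}) = dt J (c \<sigma> (tau \<sigma>)) z" if \<sigma>: "\<sigma> < s" for \<sigma>
    unfolding lf
  proof (rule Min_eqI)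
    show "finite ((\<lambda>\<tau>. dt J (c \<sigma> \<tau>) z) ` {..<t})" by simp
    show "dt J (c \<sigma> (tau \<sigma>)) z \<in> (\<lambda>\<tau>. dt J (c \<sigma> \<tau>) z) ` {..<t}" using tau \<sigma> by auto
    fix y assume "y \<in> (\<lambda>\<tau>. dt J (c \<sigma> \<tau>) z) ` {..<t}"
    then obtain \<tau> where \<tau>: "\<tau> < t" "y = dt J (c \<sigma> \<tau>) z" by auto
    have "dt J (\<lambda>x. c \<sigma> \<tau> x - c \<sigma> (tau \<sigma>) x) z \<ge> 0"
      using tau \<sigma> \<tau> by (intro closed_dt_nonneg[OF S z(2)]) (auto simp: dt_diff)
    then show "dt J (c \<sigma> (tau \<sigma>)) z \<le> y" using \<tau> by (simp add: dt_diff)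
  qed
  have "(\<Prod>\<sigma><s. Y \<sigma> powi (Min ((\<lambda>\<tau>. linform c n \<sigma> \<tau> (\<lambda>i. nat (z i))) ` {..<t}))) =
      (\<Prod>\<sigma><s. Y \<sigma> powi dt J (c \<sigma> (tau \<sigma>)) z)"
    using mn by (intro prod.cong refl) auto
  then show ?thesis unfolding Zterm_def chT_def p1 by simp
qed


type_synonym fdata = "(nat \<Rightarrow> nat \<Rightarrow> int) \<times> (nat \<Rightarrow> int) set \<times> (nat \<Rightarrow> nat)"

definition CF :: "(nat \<Rightarrow> complex) \<Rightarrow> (nat \<Rightarrow> complex) \<Rightarrow> nat set \<Rightarrow> (nat \<Rightarrow> nat \<Rightarrow> nat \<Rightarrow> int) \<Rightarrow> nat \<Rightarrow> fdata \<Rightarrow> complex" where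
  "CF X Y J c s d = (\<Sum>p\<in>fst (snd d). chT X Y J c s (snd (snd d)) p) *
      (\<Prod>k\<in>J. 1 / (1 - chT X Y J c s (snd (snd d)) (fst d k)))"

definition OS :: "nat set \<Rightarrow> (nat \<Rightarrow> bool) \<Rightarrow> (nat \<Rightarrow> int) set" where
  "OS J sg = {z. supp_on J z \<and> (\<forall>k\<in>J. if sg k then z k \<ge> 0 else z k > 0)}"

definition gens_ok :: "nat set \<Rightarrow> (nat \<Rightarrow> nat \<Rightarrow> int) \<Rightarrow> bool" where
  "gens_ok J V \<longleftrightarrow> (\<forall>k\<in>J. (\<forall>x. V k x \<ge> 0) \<and> supp_on J (V k) \<and> (\<Sum>x\<in>J. V k x) \<ge> 1)"

lemma ap_nonzero2: "ap J g v \<noteq> 0 \<Longrightarrow> \<exists>x\<in>J. v x \<noteq> 0"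
  unfolding ap_def by (metis (no_types, lifting) mult_zero_right sum.neutral)

lemma OS_inq:
  assumes J: "finite J" and q: "\<forall>k\<in>J. q k \<noteq> 0 \<and> (q k > 0 \<longleftrightarrow> sg k)"
  shows "OS J sg = {z. inq J L0 q z}" and "OS J (\<lambda>k. \<not> sg k) = {z. inq J L0 (\<lambda>x. - q x) z}"
proof -
  have e: "ap J (L0 k) (rv z) = real_of_int (z k)" "ap J (L0 k) q = q k" if "k \<in> J" for k z
    using ap_L0[OF J that] by (auto simp: rv_def)
  have qq: "if sg k then q k > 0 else q k < 0" if "k \<in> J" for k
  proof -
    have "q k \<noteq> 0" "q k > 0 \<longleftrightarrow> sg k" using q that by auto
    then show ?thesis by (cases "sg k") auto
  qed
  have p: "pos (real_of_int (z k)) (q k) \<longleftrightarrow> (if sg k then z k \<ge> 0 else z k > 0)" if "k \<in> J" for k z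
    using qq[OF that] by (cases "sg k") (auto simp: pos_def)
  have p2: "pos (real_of_int (z k)) (- q k) \<longleftrightarrow> (if \<not> sg k then z k \<ge> 0 else z k > 0)" if "k \<in> J" for k z
    using qq[OF that] by (cases "sg k") (auto simp: pos_def)
  show "OS J sg = {z. inq J L0 q z}" using e p by (auto simp: OS_def inq_def)
  show "OS J (\<lambda>k. \<not> sg k) = {z. inq J L0 (\<lambda>x. - q x) z}" using e p2 by (auto simp: OS_def inq_def ap_uminus)
qed


lemma face_thm:
  assumes J: "finite J" "J \<subseteq> {..<n}" and t: "t \<ge> 1"
  shows "\<exists>D::fdata list. (\<forall>d\<in>set D. finite (fst (snd d)) \<and> gens_ok J (fst d)) \<and>
     (\<forall>X Y. (\<forall>\<rho>\<in>J. X \<rho> \<noteq> 0) \<and> (\<forall>\<sigma><s. Y \<sigma> \<noteq> 0) \<longrightarrow>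
        ((\<forall>d\<in>set D. \<forall>k\<in>J. norm (chT X Y J c s (snd (snd d)) (fst d k)) < 1) \<longrightarrow>
            ((\<lambda>z. Zterm c n s t X Y (\<lambda>i. nat (z i))) has_sum (\<Sum>i<length D. CF X Y J c s (D!i))) (OS J sg))
        \<and> ((\<forall>d\<in>set D. \<forall>k\<in>J. norm (chT X Y J c s (snd (snd d)) (fst d k)) > 1) \<longrightarrow>
            ((\<lambda>z. Zterm c n s t (\<lambda>\<rho>. inverse (X \<rho>)) (\<lambda>\<sigma>. inverse (Y \<sigma>)) (\<lambda>i. nat (z i))) has_sum
               ((-1)^card J * (\<Sum>i<length D. CF X Y J c s (D!i)))) (OS J (\<lambda>k. \<not> sg k))))"
proof -
  obtain Ts q where q: "\<forall>k\<in>J. q k \<noteq> 0 \<and> (q k > 0 \<longleftrightarrow> sg k)"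
    and TsP: "\<forall>T\<in>set Ts. scone J (fst T) (snd T) \<and> nonneg J (fst T) \<and> (\<forall>b\<in>set (Bl c s t). onesided J b (fst T)) \<and>
        (\<forall>k\<in>J. ap J (snd T k) q \<noteq> 0)"
    and c1: "\<forall>z. cnt J q z Ts = (if inq J L0 q z then 1 else 0)"
    and c2: "\<forall>z. cnt J (\<lambda>x. - q x) z Ts = (if inq J L0 (\<lambda>x. - q x) z then 1 else 0)"
    using face_decomp[OF J(1), of sg "Bl c s t"] by blast
  define tauP where "tauP V tau \<longleftrightarrow> (\<forall>\<sigma><s. tau \<sigma> < t \<and> (\<forall>\<tau><t. \<forall>k\<in>J. dt J (c \<sigma> (tau \<sigma>)) (V k) \<le> dt J (c \<sigma> \<tau>) (V k)))"
    for V and tau :: "nat \<Rightarrow> nat"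
  have tauex: "\<exists>tau. tauP (fst T) tau" if T: "T \<in> set Ts" for T
  proof -
    have "\<forall>\<sigma>. \<exists>\<tau>0. \<sigma> < s \<longrightarrow> \<tau>0 < t \<and> (\<forall>\<tau><t. \<forall>k\<in>J. dt J (c \<sigma> \<tau>0) (fst T k) \<le> dt J (c \<sigma> \<tau>) (fst T k))"
    proof
      fix \<sigma> show "\<exists>\<tau>0. \<sigma> < s \<longrightarrow> \<tau>0 < t \<and> (\<forall>\<tau><t. \<forall>k\<in>J. dt J (c \<sigma> \<tau>0) (fst T k) \<le> dt J (c \<sigma> \<tau>) (fst T k))"
      proof (cases "\<sigma> < s")
        case True
        then show ?thesis using tau_choice[OF J(1) _ t True, where V="fst T" and c=c] TsP T by blast
      qed auto
    qed
    then show ?thesis unfolding tauP_def by (rule choice)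
  qed
  define tauOf where "tauOf T = (SOME tau. tauP (fst T) tau)" for T :: cone
  have tauOf: "tauP (fst T) (tauOf T)" if "T \<in> set Ts" for T
    unfolding tauOf_def using tauex[OF that] by (rule someI_ex)
  define OpT where "OpT T = {k\<in>J. ap J (snd T k) q < 0}" for T :: cone
  define D :: "fdata list" where "D = map (\<lambda>T. (fst T, Par J (snd T) (OpT T), tauOf T)) Ts"
  have lenD: "length D = length Ts" by (simp add: D_def)
  have Di: "D!i = (fst (Ts!i), Par J (snd (Ts!i)) (OpT (Ts!i)), tauOf (Ts!i))" if "i < length Ts" for i
    using that by (simp add: D_def)
  have Ti: "Ts!i \<in> set Ts" if "i < length Ts" for i using that by simp
  have gens: "gens_ok J (fst T)" if T: "T \<in> set Ts" for T
    unfolding gens_ok_def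
  proof (intro ballI conjI allI)
    fix k assume k: "k \<in> J"
    have S: "scone J (fst T) (snd T)" "nonneg J (fst T)" using TsP T by auto
    then show "fst T k x \<ge> 0" for x using k by (auto simp: nonneg_def)
    show "supp_on J (fst T k)" using S k by (auto simp: scone_def)
    have "ap J (snd T k) (rv (fst T k)) = 1" using S k by (auto simp: scone_def)
    then obtain x where x: "x \<in> J" "rv (fst T k) x \<noteq> 0" using ap_nonzero2[of J "snd T k" "rv (fst T k)"] by auto
    have "fst T k x \<noteq> 0" using x by (simp add: rv_def)
    moreover have "fst T k x \<ge> 0" using S(2) k by (simp add: nonneg_def)
    ultimately have "fst T k x \<ge> 1" by simp
    also have "fst T k x \<le> (\<Sum>x\<in>J. fst T k x)"
      using S(2) k x J(1) by (intro member_le_sum) (auto simp: nonneg_def)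
    finally show "(\<Sum>x\<in>J. fst T k x) \<ge> 1" .
  qed
  have Dprops: "\<forall>d\<in>set D. finite (fst (snd d)) \<and> gens_ok J (fst d)"
    using TsP gens finite_Par[OF _ J(1)] by (auto simp: D_def)
  have main: "((\<forall>d\<in>set D. \<forall>k\<in>J. norm (chT X Y J c s (snd (snd d)) (fst d k)) < 1) \<longrightarrow>
            ((\<lambda>z. Zterm c n s t X Y (\<lambda>i. nat (z i))) has_sum (\<Sum>i<length D. CF X Y J c s (D!i))) (OS J sg))
        \<and> ((\<forall>d\<in>set D. \<forall>k\<in>J. norm (chT X Y J c s (snd (snd d)) (fst d k)) > 1) \<longrightarrow>
            ((\<lambda>z. Zterm c n s t (\<lambda>\<rho>. inverse (X \<rho>)) (\<lambda>\<sigma>. inverse (Y \<sigma>)) (\<lambda>i. nat (z i))) has_sum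
               ((-1)^card J * (\<Sum>i<length D. CF X Y J c s (D!i)))) (OS J (\<lambda>k. \<not> sg k)))"
    if XY: "(\<forall>\<rho>\<in>J. X \<rho> \<noteq> 0) \<and> (\<forall>\<sigma><s. Y \<sigma> \<noteq> 0)" for X Y
  proof (intro conjI impI)
    have mc: "mchar (chT X Y J c s tau)" for tau using mchar_chT XY by blast
    have ZT: "Zterm c n s t X Y (\<lambda>i. nat (z i)) = chT X Y J c s (tauOf (Ts!i)) z"
      if i: "i < length Ts" and z: "z \<in> SO J (snd (Ts!i)) Op" for i z Op
    proof -
      have zz: "supp_on J z" "\<forall>k\<in>J. ap J (snd (Ts!i) k) (rv z) \<ge> 0"
        using z by (auto simp: SO_def split: if_splits)
      have S: "scone J (fst (Ts!i)) (snd (Ts!i))" "nonneg J (fst (Ts!i))" using TsP Ti[OF i] by auto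
      have tp: "\<forall>\<sigma><s. tauOf (Ts!i) \<sigma> < t \<and> (\<forall>\<tau><t. \<forall>k\<in>J. dt J (c \<sigma> (tauOf (Ts!i) \<sigma>)) (fst (Ts!i) k) \<le> dt J (c \<sigma> \<tau>) (fst (Ts!i) k))"
        using tauOf[OF Ti[OF i]] unfolding tauP_def .
      show ?thesis by (rule Zterm_chT[OF J S zz tp])
    qed
    assume sm: "\<forall>d\<in>set D. \<forall>k\<in>J. norm (chT X Y J c s (snd (snd d)) (fst d k)) < 1"
    show "((\<lambda>z. Zterm c n s t X Y (\<lambda>i. nat (z i))) has_sum (\<Sum>i<length D. CF X Y J c s (D!i))) (OS J sg)"
      unfolding OS_inq(1)[OF J(1) q] lenD
    proof (rule sum_over_decomp[OF c1])
      fix i assume i: "i < length Ts"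
      have S: "scone J (fst (Ts!i)) (snd (Ts!i))" using TsP Ti[OF i] by auto
      have small: "norm (chT X Y J c s (tauOf (Ts!i)) (fst (Ts!i) k)) < 1" if "k \<in> J" for k
      proof -
        have "D!i \<in> set D" using i lenD by simp
        then have "\<forall>k\<in>J. norm (chT X Y J c s (snd (snd (D!i))) (fst (D!i) k)) < 1" using sm by blast
        then show ?thesis using that Di[OF i] by simp
      qed
      have H: "(chT X Y J c s (tauOf (Ts!i)) has_sum CF X Y J c s (D!i)) (SO J (snd (Ts!i)) (OpT (Ts!i)))"
        using SSL[OF S J(1) mc small] unfolding Di[OF i] CF_def by simp
      have eq: "{z. inq J (snd (Ts!i)) q z} = SO J (snd (Ts!i)) (OpT (Ts!i))"
        unfolding OpT_def by (rule inq_SO(1)) (use TsP Ti[OF i] in auto)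
      show "((\<lambda>z. Zterm c n s t X Y (\<lambda>i. nat (z i))) has_sum CF X Y J c s (D!i)) {z. inq J (snd (Ts!i)) q z}"
        unfolding eq using H by (rule has_sum_cong[THEN iffD2, rotated]) (use ZT[OF i] in auto)
    qed
  next
    have mc: "mchar (chT X Y J c s tau)" for tau using mchar_chT XY by blast
    have ZT: "Zterm c n s t X Y (\<lambda>i. nat (z i)) = chT X Y J c s (tauOf (Ts!i)) z"
      if i: "i < length Ts" and z: "z \<in> SO J (snd (Ts!i)) Op" for i z Op
    proof -
      have zz: "supp_on J z" "\<forall>k\<in>J. ap J (snd (Ts!i) k) (rv z) \<ge> 0"
        using z by (auto simp: SO_def split: if_splits)
      have S: "scone J (fst (Ts!i)) (snd (Ts!i))" "nonneg J (fst (Ts!i))" using TsP Ti[OF i] by auto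
      have tp: "\<forall>\<sigma><s. tauOf (Ts!i) \<sigma> < t \<and> (\<forall>\<tau><t. \<forall>k\<in>J. dt J (c \<sigma> (tauOf (Ts!i) \<sigma>)) (fst (Ts!i) k) \<le> dt J (c \<sigma> \<tau>) (fst (Ts!i) k))"
        using tauOf[OF Ti[OF i]] unfolding tauP_def .
      show ?thesis by (rule Zterm_chT[OF J S zz tp])
    qed
    assume bg: "\<forall>d\<in>set D. \<forall>k\<in>J. norm (chT X Y J c s (snd (snd d)) (fst d k)) > 1"
    have "((\<lambda>z. Zterm c n s t (\<lambda>\<rho>. inverse (X \<rho>)) (\<lambda>\<sigma>. inverse (Y \<sigma>)) (\<lambda>i. nat (z i))) has_sum
               (\<Sum>i<length Ts. (-1)^card J * CF X Y J c s (D!i))) (OS J (\<lambda>k. \<not> sg k))"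
      unfolding OS_inq(2)[OF J(1) q]
    proof (rule sum_over_decomp[OF c2])
      fix i assume i: "i < length Ts"
      have S: "scone J (fst (Ts!i)) (snd (Ts!i))" using TsP Ti[OF i] by auto
      have big: "norm (chT X Y J c s (tauOf (Ts!i)) (fst (Ts!i) k)) > 1" if "k \<in> J" for k
      proof -
        have "D!i \<in> set D" using i lenD by simp
        then have "\<forall>k\<in>J. norm (chT X Y J c s (snd (snd (D!i))) (fst (D!i) k)) > 1" using bg by blast
        then show ?thesis using that Di[OF i] by simp
      qed
      have H: "((\<lambda>z. inverse (chT X Y J c s (tauOf (Ts!i)) z)) has_sum ((-1)^card J * CF X Y J c s (D!i)))
          (SO J (snd (Ts!i)) (J - OpT (Ts!i)))"
        using RL[OF S J(1) mc big] unfolding Di[OF i] CF_def by simp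
      have eq: "{z. inq J (snd (Ts!i)) (\<lambda>x. - q x) z} = SO J (snd (Ts!i)) (J - OpT (Ts!i))"
        unfolding OpT_def by (rule inq_SO(2)) (use TsP Ti[OF i] in auto)
      show "((\<lambda>z. Zterm c n s t (\<lambda>\<rho>. inverse (X \<rho>)) (\<lambda>\<sigma>. inverse (Y \<sigma>)) (\<lambda>i. nat (z i))) has_sum
          (-1)^card J * CF X Y J c s (D!i)) {z. inq J (snd (Ts!i)) (\<lambda>x. - q x) z}"
        unfolding eq Zterm_inverse using H by (rule has_sum_cong[THEN iffD2, rotated]) (use ZT[OF i] in auto)
    qed
    then show "((\<lambda>z. Zterm c n s t (\<lambda>\<rho>. inverse (X \<rho>)) (\<lambda>\<sigma>. inverse (Y \<sigma>)) (\<lambda>i. nat (z i))) has_sum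
               ((-1)^card J * (\<Sum>i<length D. CF X Y J c s (D!i)))) (OS J (\<lambda>k. \<not> sg k))"
      by (simp add: lenD sum_distrib_left)
  qed
  show ?thesis using Dprops main by blast
qed


definition Set1 :: "nat \<Rightarrow> nat \<Rightarrow> nat set \<Rightarrow> (nat \<Rightarrow> nat) set" where
  "Set1 l n S = {r. (\<forall>\<rho>. n \<le> \<rho> \<longrightarrow> r \<rho> = 0) \<and> (\<forall>\<rho>\<in>S. r \<rho> = 0) \<and> (\<forall>\<rho>\<in>{l..<n} - S. 1 \<le> r \<rho>)}"

definition Set2 :: "nat \<Rightarrow> nat \<Rightarrow> nat set \<Rightarrow> (nat \<Rightarrow> nat) set" where
  "Set2 l n S = {r. (\<forall>\<rho>. n \<le> \<rho> \<longrightarrow> r \<rho> = 0) \<and> (\<forall>\<rho>\<in>S. r \<rho> = 0) \<and> (\<forall>\<rho><l. 1 \<le> r \<rho>)}"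

lemma inj_int_vec: "inj_on (\<lambda>(r::nat \<Rightarrow> nat) i. int (r i)) A"
  by (rule inj_onI) (auto simp: fun_eq_iff)

lemma Set12_image:
  assumes "S \<subseteq> {l..<n}" "l \<le> n"
  shows "(\<lambda>r i. int (r i)) ` Set1 l n S = OS ({..<n} - S) (\<lambda>k. k < l)"
    and "(\<lambda>r i. int (r i)) ` Set2 l n S = OS ({..<n} - S) (\<lambda>k. \<not> k < l)"
proof -
  have out: "i \<notin> {..<n} - S \<longleftrightarrow> n \<le> i \<or> i \<in> S" for i by auto
  have mid: "k \<in> {..<n} - S \<Longrightarrow> \<not> k < l \<Longrightarrow> k \<in> {l..<n} - S" for k by auto
  have mid2: "k < l \<Longrightarrow> k \<in> {..<n} - S" for k using assms by auto
  have zback: "(z :: nat \<Rightarrow> int) = (\<lambda>r i. int (r i)) (\<lambda>i. nat (z i))" if "\<And>i. z i \<ge> 0" for z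
    using that by (simp add: fun_eq_iff)
  show "(\<lambda>r i. int (r i)) ` Set1 l n S = OS ({..<n} - S) (\<lambda>k. k < l)"
  proof (intro set_eqI iffI)
    fix z assume "z \<in> (\<lambda>r i. int (r i)) ` Set1 l n S"
    then obtain r where r: "r \<in> Set1 l n S" and z: "z = (\<lambda>i. int (r i))" by auto
    have r1: "\<forall>\<rho>. n \<le> \<rho> \<longrightarrow> r \<rho> = 0" "\<forall>\<rho>\<in>S. r \<rho> = 0" "\<forall>\<rho>\<in>{l..<n} - S. 1 \<le> r \<rho>"
      using r by (auto simp: Set1_def)
    have "supp_on ({..<n} - S) z" unfolding supp_on_def z using r1(1,2) out by auto
    moreover have "if k < l then z k \<ge> 0 else z k > 0" if k: "k \<in> {..<n} - S" for k
    proof (cases "k < l")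
      case False
      then have "1 \<le> r k" using r1(3) mid[OF k False] by blast
      then show ?thesis using False by (simp add: z)
    qed (simp add: z)
    ultimately show "z \<in> OS ({..<n} - S) (\<lambda>k. k < l)" by (auto simp: OS_def)
  next
    fix z assume z: "z \<in> OS ({..<n} - S) (\<lambda>k. k < l)"
    have zs: "supp_on ({..<n} - S) z" and zk: "\<forall>k\<in>{..<n} - S. if k < l then z k \<ge> 0 else z k > 0"
      using z by (auto simp: OS_def)
    have zn: "z i \<ge> 0" for i
    proof (cases "i \<in> {..<n} - S")
      case True
      then have "if i < l then z i \<ge> 0 else z i > 0" using zk by blast
      then show ?thesis by (auto split: if_splits)
    next
      case False then show ?thesis using zs by (simp add: supp_on_def)
    qed
    have "(\<lambda>i. nat (z i)) \<in> Set1 l n S"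
      unfolding Set1_def
    proof (intro CollectI conjI allI impI ballI)
      fix \<rho> assume "n \<le> \<rho>" then show "nat (z \<rho>) = 0" using zs by (simp add: supp_on_def)
    next
      fix \<rho> assume "\<rho> \<in> S" then show "nat (z \<rho>) = 0" using zs by (simp add: supp_on_def)
    next
      fix \<rho> assume r: "\<rho> \<in> {l..<n} - S"
      then have "z \<rho> > 0" using zk by auto
      then show "1 \<le> nat (z \<rho>)" by simp
    qed
    moreover have "z = (\<lambda>r i. int (r i)) (\<lambda>i. nat (z i))" using zn by (simp add: fun_eq_iff)
    ultimately show "z \<in> (\<lambda>r i. int (r i)) ` Set1 l n S"
      by (rule rev_image_eqI[of "\<lambda>i. nat (z i)" "Set1 l n S" z "\<lambda>r i. int (r i)"])
  qed
  show "(\<lambda>r i. int (r i)) ` Set2 l n S = OS ({..<n} - S) (\<lambda>k. \<not> k < l)"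
  proof (intro set_eqI iffI)
    fix z assume "z \<in> (\<lambda>r i. int (r i)) ` Set2 l n S"
    then obtain r where r: "r \<in> Set2 l n S" and z: "z = (\<lambda>i. int (r i))" by auto
    have r1: "\<forall>\<rho>. n \<le> \<rho> \<longrightarrow> r \<rho> = 0" "\<forall>\<rho>\<in>S. r \<rho> = 0" "\<forall>\<rho><l. 1 \<le> r \<rho>"
      using r by (auto simp: Set2_def)
    have "supp_on ({..<n} - S) z" unfolding supp_on_def z using r1(1,2) out by auto
    moreover have "if \<not> k < l then z k \<ge> 0 else z k > 0" if "k \<in> {..<n} - S" for k
      using r1(3) by (auto simp: z)
    ultimately show "z \<in> OS ({..<n} - S) (\<lambda>k. \<not> k < l)" by (auto simp: OS_def)
  next
    fix z assume z: "z \<in> OS ({..<n} - S) (\<lambda>k. \<not> k < l)"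
    have zs: "supp_on ({..<n} - S) z" and zk: "\<forall>k\<in>{..<n} - S. if \<not> k < l then z k \<ge> 0 else z k > 0"
      using z by (auto simp: OS_def)
    have zn: "z i \<ge> 0" for i
    proof (cases "i \<in> {..<n} - S")
      case True
      then have "if \<not> i < l then z i \<ge> 0 else z i > 0" using zk by blast
      then show ?thesis by (auto split: if_splits)
    next
      case False then show ?thesis using zs by (simp add: supp_on_def)
    qed
    have "(\<lambda>i. nat (z i)) \<in> Set2 l n S"
      unfolding Set2_def
    proof (intro CollectI conjI allI impI ballI)
      fix \<rho> assume "n \<le> \<rho>" then show "nat (z \<rho>) = 0" using zs by (simp add: supp_on_def)
    next
      fix \<rho> assume "\<rho> \<in> S" then show "nat (z \<rho>) = 0" using zs by (simp add: supp_on_def)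
    next
      fix \<rho> assume r: "\<rho> < l"
      then have "z \<rho> > 0" using zk mid2[OF r] by auto
      then show "1 \<le> nat (z \<rho>)" by simp
    qed
    moreover have "z = (\<lambda>r i. int (r i)) (\<lambda>i. nat (z i))" using zn by (simp add: fun_eq_iff)
    ultimately show "z \<in> (\<lambda>r i. int (r i)) ` Set2 l n S"
      by (rule rev_image_eqI[of "\<lambda>i. nat (z i)" "Set2 l n S" z "\<lambda>r i. int (r i)"])
  qed
qed

lemma reindex_nat:
  fixes F :: "(nat \<Rightarrow> nat) \<Rightarrow> complex"
  assumes "((\<lambda>z. F (\<lambda>i. nat (z i))) has_sum v) ((\<lambda>r i. int (r i)) ` A)"
  shows "(F has_sum v) A"
proof -
  have e: "((\<lambda>z. F (\<lambda>i. nat (z i))) has_sum v) ((\<lambda>r i. int (r i)) ` A) \<longleftrightarrow>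
      (((\<lambda>z. F (\<lambda>i. nat (z i))) \<circ> (\<lambda>r i. int (r i))) has_sum v) A"
    by (rule has_sum_reindex[OF inj_int_vec])
  have "(((\<lambda>z. F (\<lambda>i. nat (z i))) \<circ> (\<lambda>r i. int (r i))) has_sum v) A"
    using assms e by blast
  then show ?thesis by (simp add: o_def)
qed

lemma has_sum_sum_fin:
  fixes f :: "'i \<Rightarrow> 'a \<Rightarrow> complex"
  shows "finite I \<Longrightarrow> (\<And>i. i \<in> I \<Longrightarrow> (f i has_sum s i) A) \<Longrightarrow> ((\<lambda>x. \<Sum>i\<in>I. f i x) has_sum (\<Sum>i\<in>I. s i)) A"
  by (induction I rule: finite_induct) (auto intro: has_sum_add)

lemma alt_sum:
  assumes "finite Z" "Z \<noteq> {}"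
  shows "(\<Sum>S\<in>{S. S \<subseteq> Z \<and> S \<noteq> {}}. (-1::complex) ^ (card S + 1)) = 1"
proof -
  have "(\<Sum>S\<in>Pow Z. (-1::complex) ^ card S) = 0"
  proof (rule sum_alternating_cancels)
    show "finite (Pow Z)" using assms by simp
    show "card {x \<in> Pow Z. even (card x)} = card {x \<in> Pow Z. odd (card x)}"
      using card_subsupersets_even_odd[of Z "{}"] assms by (auto simp: Pow_def)
  qed
  moreover have "Pow Z = insert {} {S. S \<subseteq> Z \<and> S \<noteq> {}}" by auto
  moreover have "finite {S. S \<subseteq> Z \<and> S \<noteq> {}}" using assms by (auto intro: finite_subset[of _ "Pow Z"])
  ultimately have "1 + (\<Sum>S\<in>{S. S \<subseteq> Z \<and> S \<noteq> {}}. (-1::complex) ^ card S) = 0" by simp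
  then have "(\<Sum>S\<in>{S. S \<subseteq> Z \<and> S \<noteq> {}}. (-1::complex) ^ card S) = -1"
    by (simp add: eq_neg_iff_add_eq_0 add.commute)
  then show ?thesis by (simp add: sum_negf)
qed


lemma powi_upper:
  fixes y :: real assumes "1/2 \<le> y" "y \<le> 2"
  shows "y powi e \<le> 2 ^ nat \<bar>e\<bar>"
proof (cases "e \<ge> 0")
  case True
  then have "y powi e = y ^ nat e" by (simp add: power_int_def)
  also have "\<dots> \<le> 2 ^ nat e" using assms by (intro power_mono) auto
  finally show ?thesis using True by simp
next
  case False
  then have "y powi e = inverse y ^ nat (-e)" by (simp add: power_int_def)
  also have "\<dots> \<le> 2 ^ nat (-e)" using assms by (intro power_mono) (auto simp: field_simps)
  finally show ?thesis using False by simp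
qed

lemma powi_lower:
  fixes y :: real assumes "1/2 \<le> y" "y \<le> 2"
  shows "y powi e \<ge> (1/2) ^ nat \<bar>e\<bar>"
proof (cases "e \<ge> 0")
  case True
  then have "y powi e = y ^ nat e" by (simp add: power_int_def)
  moreover have "(1/2) ^ nat e \<le> y ^ nat e" using assms by (intro power_mono) auto
  ultimately show ?thesis using True by simp
next
  case False
  then have "y powi e = inverse y ^ nat (-e)" by (simp add: power_int_def)
  moreover have "(1/2) ^ nat (-e) \<le> inverse y ^ nat (-e)" using assms
    by (intro power_mono) (auto simp: field_simps)
  ultimately show ?thesis using False by simp
qed

lemma norm_chT:
  "norm (chT X Y J c s tau z) = (\<Prod>\<rho>\<in>J. norm (X \<rho>) powi z \<rho>) * (\<Prod>\<sigma><s. norm (Y \<sigma>) powi dt J (c \<sigma> (tau \<sigma>)) z)"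
  by (simp add: chT_def norm_mult prod_norm[symmetric] norm_power_int)

lemma gens_sum:
  assumes "gens_ok J V" "k \<in> J"
  shows "(\<Sum>\<rho>\<in>J. nat (V k \<rho>)) \<ge> 1" and "\<And>\<rho>. norm (x::complex) powi V k \<rho> = norm x ^ nat (V k \<rho>)"
proof -
  have nn: "V k \<rho> \<ge> 0" for \<rho> using assms by (auto simp: gens_ok_def)
  have "int (\<Sum>\<rho>\<in>J. nat (V k \<rho>)) = (\<Sum>\<rho>\<in>J. int (nat (V k \<rho>)))" by simp
  also have "\<dots> = (\<Sum>\<rho>\<in>J. V k \<rho>)" using nn by (intro sum.cong refl) simp
  also have "\<dots> \<ge> 1" using assms by (auto simp: gens_ok_def)
  finally have "int (\<Sum>\<rho>\<in>J. nat (V k \<rho>)) \<ge> 1" .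
  then show "(\<Sum>\<rho>\<in>J. nat (V k \<rho>)) \<ge> 1" by linarith
  show "norm (x::complex) powi V k \<rho> = norm x ^ nat (V k \<rho>)" for \<rho>
    using nn[of \<rho>] by (simp add: power_int_def)
qed

lemma chT_upper:
  assumes G: "gens_ok J V" and k: "k \<in> J" and d: "0 \<le> d" "d \<le> 1"
    and X: "\<forall>\<rho>\<in>J. norm (X \<rho>) \<le> d" and Y: "\<forall>\<sigma><s. 1/2 \<le> norm (Y \<sigma>) \<and> norm (Y \<sigma>) \<le> 2"
  shows "norm (chT X Y J c s tau (V k)) \<le> d * 2 ^ (\<Sum>\<sigma><s. nat \<bar>dt J (c \<sigma> (tau \<sigma>)) (V k)\<bar>)"
proof -
  have "(\<Prod>\<rho>\<in>J. norm (X \<rho>) powi V k \<rho>) = (\<Prod>\<rho>\<in>J. norm (X \<rho>) ^ nat (V k \<rho>))"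
    using gens_sum(2)[OF G k] by simp
  also have "\<dots> \<le> (\<Prod>\<rho>\<in>J. d ^ nat (V k \<rho>))"
    using X by (intro prod_mono) (auto intro: power_mono)
  also have "\<dots> = d ^ (\<Sum>\<rho>\<in>J. nat (V k \<rho>))" by (simp add: power_sum)
  also have "\<dots> \<le> d ^ 1" using gens_sum(1)[OF G k] d by (intro power_decreasing) auto
  finally have A: "(\<Prod>\<rho>\<in>J. norm (X \<rho>) powi V k \<rho>) \<le> d" by simp
  have "(\<Prod>\<sigma><s. norm (Y \<sigma>) powi dt J (c \<sigma> (tau \<sigma>)) (V k)) \<le> (\<Prod>\<sigma><s. 2 ^ nat \<bar>dt J (c \<sigma> (tau \<sigma>)) (V k)\<bar>)"
    using Y by (intro prod_mono conjI powi_upper) auto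
  also have "\<dots> = 2 ^ (\<Sum>\<sigma><s. nat \<bar>dt J (c \<sigma> (tau \<sigma>)) (V k)\<bar>)" by (simp add: power_sum)
  finally have B: "(\<Prod>\<sigma><s. norm (Y \<sigma>) powi dt J (c \<sigma> (tau \<sigma>)) (V k)) \<le> 2 ^ (\<Sum>\<sigma><s. nat \<bar>dt J (c \<sigma> (tau \<sigma>)) (V k)\<bar>)" .
  show ?thesis unfolding norm_chT
    by (rule mult_mono[OF A B]) (use d in \<open>auto intro!: prod_nonneg\<close>)
qed

lemma chT_lower:
  assumes G: "gens_ok J V" and k: "k \<in> J" and K: "1 \<le> K"
    and X: "\<forall>\<rho>\<in>J. norm (X \<rho>) \<ge> K" and Y: "\<forall>\<sigma><s. 1/2 \<le> norm (Y \<sigma>) \<and> norm (Y \<sigma>) \<le> 2"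
  shows "norm (chT X Y J c s tau (V k)) \<ge> K * (1/2) ^ (\<Sum>\<sigma><s. nat \<bar>dt J (c \<sigma> (tau \<sigma>)) (V k)\<bar>)"
proof -
  have "K = K ^ 1" by simp
  also have "\<dots> \<le> K ^ (\<Sum>\<rho>\<in>J. nat (V k \<rho>))" using gens_sum(1)[OF G k] K by (intro power_increasing) auto
  also have "\<dots> = (\<Prod>\<rho>\<in>J. K ^ nat (V k \<rho>))" by (simp add: power_sum)
  also have "\<dots> \<le> (\<Prod>\<rho>\<in>J. norm (X \<rho>) ^ nat (V k \<rho>))"
    using X K by (intro prod_mono) (auto intro: power_mono)
  also have "\<dots> = (\<Prod>\<rho>\<in>J. norm (X \<rho>) powi V k \<rho>)"
    using gens_sum(2)[OF G k] by simp
  finally have A: "K \<le> (\<Prod>\<rho>\<in>J. norm (X \<rho>) powi V k \<rho>)" .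
  have "(1/2) ^ (\<Sum>\<sigma><s. nat \<bar>dt J (c \<sigma> (tau \<sigma>)) (V k)\<bar>) = (\<Prod>\<sigma><s. (1/2) ^ nat \<bar>dt J (c \<sigma> (tau \<sigma>)) (V k)\<bar>)"
    by (simp add: power_sum)
  also have "\<dots> \<le> (\<Prod>\<sigma><s. norm (Y \<sigma>) powi dt J (c \<sigma> (tau \<sigma>)) (V k))"
    using Y by (intro prod_mono conjI powi_lower) auto
  finally have B: "(1/2) ^ (\<Sum>\<sigma><s. nat \<bar>dt J (c \<sigma> (tau \<sigma>)) (V k)\<bar>) \<le> (\<Prod>\<sigma><s. norm (Y \<sigma>) powi dt J (c \<sigma> (tau \<sigma>)) (V k))" .
  show ?thesis unfolding norm_chT
    by (rule mult_mono[OF A B]) (auto intro!: prod_nonneg)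
qed


lemma cone_union:
  assumes n: "n = l + a"
  shows "cone l a = (\<Union>S\<in>{S. S \<subseteq> {l..<n} \<and> S \<noteq> {}}. Set1 l n S)"
    and "\<And>S S'. S \<in> {S. S \<subseteq> {l..<n} \<and> S \<noteq> {}} \<Longrightarrow> S' \<in> {S. S \<subseteq> {l..<n} \<and> S \<noteq> {}} \<Longrightarrow> S \<noteq> S' \<Longrightarrow>
        Set1 l n S \<inter> Set1 l n S' = {}"
proof -
  have Z: "S = {\<rho>\<in>{l..<n}. r \<rho> = 0}" if r: "r \<in> Set1 l n S" and S: "S \<subseteq> {l..<n}" for r S
  proof -
    have z: "\<forall>\<rho>\<in>S. r \<rho> = 0" and o: "\<forall>\<rho>\<in>{l..<n} - S. 1 \<le> r \<rho>" using r unfolding Set1_def by blast+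
    show ?thesis
    proof (intro set_eqI iffI)
      fix \<rho> assume "\<rho> \<in> S" then show "\<rho> \<in> {\<rho>\<in>{l..<n}. r \<rho> = 0}" using z S by blast
    next
      fix \<rho> assume \<rho>: "\<rho> \<in> {\<rho>\<in>{l..<n}. r \<rho> = 0}"
      show "\<rho> \<in> S"
      proof (rule ccontr)
        assume "\<rho> \<notin> S"
        then have "1 \<le> r \<rho>" using o \<rho> by blast
        then show False using \<rho> by simp
      qed
    qed
  qed
  show "cone l a = (\<Union>S\<in>{S. S \<subseteq> {l..<n} \<and> S \<noteq> {}}. Set1 l n S)"
  proof (intro set_eqI iffI)
    fix r assume r: "r \<in> cone l a"
    define S where "S = {\<rho>\<in>{l..<n}. r \<rho> = 0}"
    have r1: "\<forall>\<rho>. l + a \<le> \<rho> \<longrightarrow> r \<rho> = 0" "\<exists>\<rho>. l \<le> \<rho> \<and> \<rho> < l + a \<and> r \<rho> = 0"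
      using r unfolding cone_def by blast+
    have "S \<noteq> {}" using r1(2) n unfolding S_def by auto
    moreover have "S \<subseteq> {l..<n}" unfolding S_def by blast
    moreover have "r \<in> Set1 l n S"
      unfolding Set1_def
    proof (intro CollectI conjI allI impI ballI)
      fix \<rho> assume "n \<le> \<rho>" then show "r \<rho> = 0" using r1(1) n by simp
    next
      fix \<rho> assume "\<rho> \<in> S" then show "r \<rho> = 0" unfolding S_def by blast
    next
      fix \<rho> assume "\<rho> \<in> {l..<n} - S" then show "1 \<le> r \<rho>" unfolding S_def by auto
    qed
    ultimately show "r \<in> (\<Union>S\<in>{S. S \<subseteq> {l..<n} \<and> S \<noteq> {}}. Set1 l n S)" by blast
  next
    fix r assume "r \<in> (\<Union>S\<in>{S. S \<subseteq> {l..<n} \<and> S \<noteq> {}}. Set1 l n S)"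
    then obtain S where S: "S \<subseteq> {l..<n}" "S \<noteq> {}" "r \<in> Set1 l n S" by auto
    then obtain \<rho> where \<rho>: "\<rho> \<in> S" by auto
    have r1: "\<forall>\<rho>. n \<le> \<rho> \<longrightarrow> r \<rho> = 0" "\<forall>\<rho>\<in>S. r \<rho> = 0" using S(3) unfolding Set1_def by blast+
    have "l \<le> \<rho> \<and> \<rho> < l + a \<and> r \<rho> = 0" using \<rho> S(1) r1(2) n by auto
    then show "r \<in> cone l a" using r1(1) n unfolding cone_def by blast
  qed
  fix S S' assume "S \<in> {S. S \<subseteq> {l..<n} \<and> S \<noteq> {}}" "S' \<in> {S. S \<subseteq> {l..<n} \<and> S \<noteq> {}}" "S \<noteq> S'"
  then show "Set1 l n S \<inter> Set1 l n S' = {}" using Z by blast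
qed

lemma circ_incl_excl:
  fixes f :: "(nat \<Rightarrow> nat) \<Rightarrow> complex"
  assumes n: "n = l + a" and H: "\<And>S. S \<in> {S. S \<subseteq> {l..<n} \<and> S \<noteq> {}} \<Longrightarrow> (f has_sum w S) (Set2 l n S)"
  shows "(f has_sum (\<Sum>S\<in>{S. S \<subseteq> {l..<n} \<and> S \<noteq> {}}. (-1) ^ (card S + 1) * w S)) (cone_circ l a)"
proof -
  define Fc where "Fc = {S. S \<subseteq> {l..<n} \<and> S \<noteq> {}}"
  define U where "U = {r::nat\<Rightarrow>nat. (\<forall>\<rho>. n \<le> \<rho> \<longrightarrow> r \<rho> = 0) \<and> (\<forall>\<rho><l. 1 \<le> r \<rho>)}"
  define Zr where "Zr r = {\<rho>\<in>{l..<n}. r \<rho> = 0}" for r :: "nat \<Rightarrow> nat"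
  have finFc: "finite Fc" unfolding Fc_def by (rule finite_subset[of _ "Pow {l..<n}"]) auto
  have S2: "r \<in> Set2 l n S \<longleftrightarrow> r \<in> U \<and> S \<subseteq> Zr r" if "S \<in> Fc" for r S
    using that unfolding Set2_def U_def Zr_def Fc_def by auto
  have each: "((\<lambda>r. (-1) ^ (card S + 1) * (f r * (if r \<in> Set2 l n S then 1 else 0))) has_sum
      ((-1) ^ (card S + 1) * w S)) U" if S: "S \<in> Fc" for S
  proof -
    have "((\<lambda>r. f r * (if r \<in> Set2 l n S then 1 else 0)) has_sum w S) U"
    proof (subst has_sum_cong_neutral[where g=f and T="Set2 l n S"])
      show "(f has_sum w S) (Set2 l n S)" using H S by (auto simp: Fc_def)
    qed (use S2[OF S] in auto)
    then show ?thesis by (rule has_sum_cmult_right)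
  qed
  have tot: "((\<lambda>r. \<Sum>S\<in>Fc. (-1) ^ (card S + 1) * (f r * (if r \<in> Set2 l n S then 1 else 0))) has_sum
      (\<Sum>S\<in>Fc. (-1) ^ (card S + 1) * w S)) U"
    by (rule has_sum_sum_fin[OF finFc each])
  have pw: "(\<Sum>S\<in>Fc. (-1) ^ (card S + 1) * (f r * (if r \<in> Set2 l n S then 1 else 0))) =
      (if r \<in> cone_circ l a then f r else 0)" if r: "r \<in> U" for r
  proof -
    have "(\<Sum>S\<in>Fc. (-1) ^ (card S + 1) * (f r * (if r \<in> Set2 l n S then 1 else 0))) =
        f r * (\<Sum>S\<in>Fc. if S \<subseteq> Zr r then (-1::complex) ^ (card S + 1) else 0)"
      using S2 r by (auto simp: sum_distrib_left intro!: sum.cong)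
    also have "(\<Sum>S\<in>Fc. if S \<subseteq> Zr r then (-1::complex) ^ (card S + 1) else 0) =
        (\<Sum>S\<in>{S. S \<subseteq> Zr r \<and> S \<noteq> {}}. (-1::complex) ^ (card S + 1))"
    proof -
      have eq: "{S. S \<subseteq> Zr r \<and> S \<noteq> {}} = {S\<in>Fc. S \<subseteq> Zr r}" by (auto simp: Fc_def Zr_def)
      show ?thesis unfolding eq by (rule sum.inter_filter[OF finFc, symmetric])
    qed
    also have "\<dots> = (if Zr r \<noteq> {} then 1 else 0)"
    proof (cases "Zr r = {}")
      case True then show ?thesis by simp
    next
      case False then show ?thesis using alt_sum[of "Zr r"] by (simp add: Zr_def)
    qed
    also have "Zr r \<noteq> {} \<longleftrightarrow> r \<in> cone_circ l a" using r n by (auto simp: Zr_def U_def cone_circ_def)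
    finally show ?thesis by simp
  qed
  have "((\<lambda>r. if r \<in> cone_circ l a then f r else 0) has_sum (\<Sum>S\<in>Fc. (-1) ^ (card S + 1) * w S)) U"
    using tot by (rule has_sum_cong[THEN iffD1, rotated]) (use pw in auto)
  moreover have "cone_circ l a \<subseteq> U" using n by (auto simp: cone_circ_def U_def)
  ultimately have "(f has_sum (\<Sum>S\<in>Fc. (-1) ^ (card S + 1) * w S)) (cone_circ l a)"
    by (subst has_sum_cong_neutral[where g="\<lambda>r. if r \<in> cone_circ l a then f r else 0" and T=U]) auto
  then show ?thesis by (simp add: Fc_def)
qed


lemma lp_chT:
  assumes "J \<subseteq> {..<n}" "finite J"
  shows "lp (n + s) (\<lambda>v. chT (\<lambda>\<rho>. v \<rho>) (\<lambda>\<sigma>. v (n + \<sigma>)) J c s tau z)"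
  unfolding chT_def using assms
  by (intro lp_mult lp_prod lp_powi_var) auto

lemma chT_cong:
  assumes "\<forall>\<rho>\<in>J. X \<rho> = X' \<rho>" "\<forall>\<sigma><s. Y \<sigma> = Y' \<sigma>"
  shows "chT X Y J c s tau z = chT X' Y' J c s tau z"
  unfolding chT_def using assms by (intro arg_cong2[where f="(*)"] prod.cong) auto

lemma chT_joinv:
  assumes "J \<subseteq> {..<n}"
  shows "chT (\<lambda>\<rho>. joinv n X Y \<rho>) (\<lambda>\<sigma>. joinv n X Y (n + \<sigma>)) J c s tau z = chT X Y J c s tau z"
  using assms by (intro chT_cong) (auto simp: joinv_def)

lemma CF_frac:
  "CF X Y J c s d = (\<Sum>p\<in>fst (snd d). chT X Y J c s (snd (snd d)) p) /
      (\<Prod>k\<in>J. (1 - chT X Y J c s (snd (snd d)) (fst d k)))"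
  unfolding CF_def using prod_inversef[of "\<lambda>k. 1 - chT X Y J c s (snd (snd d)) (fst d k)" J]
  by (simp add: divide_inverse o_def)


theorem proposition4p5:
  fixes l a s t :: nat and c :: "nat \<Rightarrow> nat \<Rightarrow> nat \<Rightarrow> int"
  assumes "1 \<le> l" "1 \<le> a" "1 \<le> s" "1 \<le> t"
  shows "\<exists>P Q. is_mpoly (l + a + s) P \<and> is_mpoly (l + a + s) Q \<and>
    (\<exists>X0 Y0 \<epsilon>. \<epsilon> > 0 \<and>
       (\<forall>X Y. (\<forall>\<rho><l + a. dist (X \<rho>) (X0 \<rho>) < \<epsilon>) \<and> (\<forall>\<sigma><s. dist (Y \<sigma>) (Y0 \<sigma>) < \<epsilon>) \<longrightarrow>
          mpoly_eval (l + a + s) Q (joinv (l + a) X Y) \<noteq> 0 \<and>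
          ((\<lambda>r. Zterm c (l + a) s t X Y r) has_sum
             (mpoly_eval (l + a + s) P (joinv (l + a) X Y) /
              mpoly_eval (l + a + s) Q (joinv (l + a) X Y))) (cone l a))) \<and>
    (\<exists>X0 Y0 \<epsilon>. \<epsilon> > 0 \<and>
       (\<forall>X Y. (\<forall>\<rho><l + a. dist (X \<rho>) (X0 \<rho>) < \<epsilon> \<and> X \<rho> \<noteq> 0) \<and>
              (\<forall>\<sigma><s. dist (Y \<sigma>) (Y0 \<sigma>) < \<epsilon> \<and> Y \<sigma> \<noteq> 0) \<longrightarrow>
          mpoly_eval (l + a + s) Q (joinv (l + a) X Y) \<noteq> 0 \<and>
          ((\<lambda>r. Zterm c (l + a) s t (\<lambda>\<rho>. inverse (X \<rho>)) (\<lambda>\<sigma>. inverse (Y \<sigma>)) r) has_sum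
             ((-1) ^ (l + a - 1) *
              (mpoly_eval (l + a + s) P (joinv (l + a) X Y) /
               mpoly_eval (l + a + s) Q (joinv (l + a) X Y)))) (cone_circ l a)))"
proof -
  define n where "n = l + a"
  have n1: "n \<ge> 1" and ln: "l \<le> n" using assms by (auto simp: n_def)
  define Fc where "Fc = {S. S \<subseteq> {l..<n} \<and> S \<noteq> {}}"
  define JJ where "JJ S = {..<n} - S" for S :: "nat set"
  define sg where "sg = (\<lambda>k::nat. k < l)"
  have finFc: "finite Fc" unfolding Fc_def by (rule finite_subset[of _ "Pow {l..<n}"]) auto
  have JJ: "finite (JJ S)" "JJ S \<subseteq> {..<n}" for S by (auto simp: JJ_def)
  define FP where "FP S D \<longleftrightarrow> (\<forall>d\<in>set D. finite (fst (snd d)) \<and> gens_ok (JJ S) (fst d)) \<and>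
     (\<forall>X Y. (\<forall>\<rho>\<in>JJ S. X \<rho> \<noteq> 0) \<and> (\<forall>\<sigma><s. Y \<sigma> \<noteq> 0) \<longrightarrow>
        ((\<forall>d\<in>set D. \<forall>k\<in>JJ S. norm (chT X Y (JJ S) c s (snd (snd d)) (fst d k)) < 1) \<longrightarrow>
            ((\<lambda>z. Zterm c n s t X Y (\<lambda>i. nat (z i))) has_sum (\<Sum>i<length D. CF X Y (JJ S) c s (D!i))) (OS (JJ S) sg))
        \<and> ((\<forall>d\<in>set D. \<forall>k\<in>JJ S. norm (chT X Y (JJ S) c s (snd (snd d)) (fst d k)) > 1) \<longrightarrow>
            ((\<lambda>z. Zterm c n s t (\<lambda>\<rho>. inverse (X \<rho>)) (\<lambda>\<sigma>. inverse (Y \<sigma>)) (\<lambda>i. nat (z i))) has_sum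
               ((-1)^card (JJ S) * (\<Sum>i<length D. CF X Y (JJ S) c s (D!i)))) (OS (JJ S) (\<lambda>k. \<not> sg k))))"
    for S and D :: "fdata list"
  have "\<forall>S\<in>Fc. \<exists>D. FP S D"
  proof
    fix S assume "S \<in> Fc"
    show "\<exists>D. FP S D" unfolding FP_def by (rule face_thm[OF JJ assms(4)])
  qed
  then obtain DD where DD: "\<forall>S\<in>Fc. FP S (DD S)" by (metis bchoice)
  define R where "R X Y = (\<Sum>S\<in>Fc. \<Sum>i<length (DD S). CF X Y (JJ S) c s (DD S ! i))" for X Y
  define E where "E S d k = (\<Sum>\<sigma><s. nat \<bar>dt (JJ S) (c \<sigma> (snd (snd d) \<sigma>)) (fst d k)\<bar>)" for S and d :: fdata and k
  define Ct where "Ct = (\<Sum>S\<in>Fc. \<Sum>i<length (DD S). \<Sum>k\<in>JJ S. E S (DD S ! i) k)"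
  have Eb: "E S d k \<le> Ct" if S: "S \<in> Fc" and d: "d \<in> set (DD S)" and k: "k \<in> JJ S" for S d k
  proof -
    obtain i where i: "i < length (DD S)" "d = DD S ! i" using d by (auto simp: in_set_conv_nth)
    have "E S d k \<le> (\<Sum>k\<in>JJ S. E S (DD S ! i) k)" unfolding i(2) by (rule member_le_sum) (use k JJ(1) in auto)
    also have "\<dots> \<le> (\<Sum>i<length (DD S). \<Sum>k\<in>JJ S. E S (DD S ! i) k)"
      using i by (intro member_le_sum[where f="\<lambda>i. \<Sum>k\<in>JJ S. E S (DD S ! i) k"]) auto
    also have "\<dots> \<le> Ct" unfolding Ct_def using S finFc
      by (intro member_le_sum[where f="\<lambda>S. \<Sum>i<length (DD S). \<Sum>k\<in>JJ S. E S (DD S ! i) k"]) auto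
    finally show ?thesis .
  qed

  define N where "N = n + s"
  define I where "I = Sigma Fc (\<lambda>S. {..<length (DD S)})"
  have finI: "finite I" unfolding I_def using finFc by auto
  define chv where "chv Si v z = chT (\<lambda>\<rho>. v \<rho>) (\<lambda>\<sigma>. v (n + \<sigma>)) (JJ (fst Si)) c s (snd (snd (DD (fst Si) ! snd Si))) z"
    for Si :: "nat set \<times> nat" and v z
  define af where "af Si v = (\<Sum>p\<in>fst (snd (DD (fst Si) ! snd Si)). chv Si v p)" for Si v
  define bf where "bf Si v = (\<Prod>k\<in>JJ (fst Si). 1 - chv Si v (fst (DD (fst Si) ! snd Si) k))" for Si v
  have FPS: "FP S (DD S)" if "S \<in> Fc" for S using DD that by blast
  have dmem: "DD (fst Si) ! snd Si \<in> set (DD (fst Si))" if "Si \<in> I" for Si using that by (auto simp: I_def)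
  have lpc: "lp N (\<lambda>v. chv Si v z)" for Si z
    unfolding chv_def N_def by (rule lp_chT[OF JJ(2,1)])
  have lpa: "lp N (af Si)" if Si: "Si \<in> I" for Si
  proof -
    have "finite (fst (snd (DD (fst Si) ! snd Si)))"
      using FPS[of "fst Si"] dmem[OF Si] Si unfolding FP_def I_def by auto
    then show ?thesis unfolding af_def by (intro lp_sum lpc)
  qed
  have lpb: "lp N (bf Si)" if "Si \<in> I" for Si
    unfolding bf_def by (intro lp_prod lp_diff lp_const lpc JJ(1))
  obtain P0 Q0 where PQ0: "ispoly N P0" "ispoly N Q0" "\<forall>v. (\<forall>j<N. v j \<noteq> 0) \<and> (\<forall>i\<in>I. bf i v \<noteq> 0) \<longrightarrow>
     Q0 v \<noteq> 0 \<and> (\<Sum>i\<in>I. af i v / bf i v) = P0 v / Q0 v"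
    using frac_sum[where a=af and b=bf and N=N, OF finI lpa lpb] by blast
  obtain P where P: "is_mpoly N P" "\<forall>v. P0 v = mpoly_eval N P v" using ispoly_mpoly[OF PQ0(1)] by blast
  obtain Q where Q: "is_mpoly N Q" "\<forall>v. Q0 v = mpoly_eval N Q v" using ispoly_mpoly[OF PQ0(2)] by blast
  have chvj: "chv Si (joinv n X Y) z = chT X Y (JJ (fst Si)) c s (snd (snd (DD (fst Si) ! snd Si))) z" for Si X Y z
    unfolding chv_def by (rule chT_joinv[OF JJ(2)])
  have Rfrac: "R X Y = (\<Sum>Si\<in>I. af Si (joinv n X Y) / bf Si (joinv n X Y))" for X Y
  proof -
    have "(\<Sum>Si\<in>I. af Si (joinv n X Y) / bf Si (joinv n X Y)) = (\<Sum>Si\<in>I. CF X Y (JJ (fst Si)) c s (DD (fst Si) ! snd Si))"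
      by (intro sum.cong refl) (simp add: af_def bf_def chvj CF_frac)
    also have "\<dots> = R X Y"
    proof -
      have "R X Y = (\<Sum>(S, i)\<in>I. CF X Y (JJ S) c s (DD S ! i))"
        unfolding R_def I_def by (rule sum.Sigma) (use finFc in auto)
      then show ?thesis by (simp add: case_prod_beta)
    qed
    finally show ?thesis by simp
  qed
  have joinv_nz: "\<forall>j<N. joinv n X Y j \<noteq> 0" if "\<forall>\<rho><n. X \<rho> \<noteq> 0" "\<forall>\<sigma><s. Y \<sigma> \<noteq> 0" for X Y
    using that by (auto simp: joinv_def N_def)
  have bf_nz: "\<forall>Si\<in>I. bf Si (joinv n X Y) \<noteq> 0"
    if ne1: "\<forall>S\<in>Fc. \<forall>d\<in>set (DD S). \<forall>k\<in>JJ S. norm (chT X Y (JJ S) c s (snd (snd d)) (fst d k)) \<noteq> 1" for X Y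
  proof
    fix Si assume Si: "Si \<in> I"
    have "1 - chT X Y (JJ (fst Si)) c s (snd (snd (DD (fst Si) ! snd Si))) (fst (DD (fst Si) ! snd Si) k) \<noteq> 0"
      if k: "k \<in> JJ (fst Si)" for k
    proof
      assume "1 - chT X Y (JJ (fst Si)) c s (snd (snd (DD (fst Si) ! snd Si))) (fst (DD (fst Si) ! snd Si) k) = 0"
      then have "chT X Y (JJ (fst Si)) c s (snd (snd (DD (fst Si) ! snd Si))) (fst (DD (fst Si) ! snd Si) k) = 1"
        by simp
      then have "norm (chT X Y (JJ (fst Si)) c s (snd (snd (DD (fst Si) ! snd Si))) (fst (DD (fst Si) ! snd Si) k)) = 1"
        by simp
      moreover have "fst Si \<in> Fc" using Si by (auto simp: I_def)
      ultimately show False using ne1 dmem[OF Si] k by blast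
    qed
    then show "bf Si (joinv n X Y) \<noteq> 0" unfolding bf_def chvj using JJ(1) by (simp add: prod_zero_iff)
  qed
  have PQval: "mpoly_eval N Q (joinv n X Y) \<noteq> 0 \<and> R X Y = mpoly_eval N P (joinv n X Y) / mpoly_eval N Q (joinv n X Y)"
    if "\<forall>\<rho><n. X \<rho> \<noteq> 0" "\<forall>\<sigma><s. Y \<sigma> \<noteq> 0"
      "\<forall>S\<in>Fc. \<forall>d\<in>set (DD S). \<forall>k\<in>JJ S. norm (chT X Y (JJ S) c s (snd (snd d)) (fst d k)) \<noteq> 1" for X Y
    using PQ0(3)[rule_format, OF conjI[OF joinv_nz[OF that(1,2)] bf_nz[OF that(3)]]] P(2) Q(2) Rfrac by simp

  have Fc_sub: "S \<subseteq> {l..<n}" if "S \<in> Fc" for S using that by (auto simp: Fc_def)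
  have Set1_OS: "(\<lambda>r i. int (r i)) ` Set1 l n S = OS (JJ S) sg" if "S \<in> Fc" for S
    unfolding JJ_def sg_def by (rule Set12_image(1)[OF Fc_sub[OF that] ln])
  have Set2_OS: "(\<lambda>r i. int (r i)) ` Set2 l n S = OS (JJ S) (\<lambda>k. \<not> sg k)" if "S \<in> Fc" for S
    unfolding JJ_def sg_def by (rule Set12_image(2)[OF Fc_sub[OF that] ln])
  have reg1: "\<exists>X0 Y0 \<epsilon>. \<epsilon> > 0 \<and> (\<forall>X Y. (\<forall>\<rho><n. dist (X \<rho>) (X0 \<rho>) < \<epsilon>) \<and> (\<forall>\<sigma><s. dist (Y \<sigma>) (Y0 \<sigma>) < \<epsilon>) \<longrightarrow>
          mpoly_eval N Q (joinv n X Y) \<noteq> 0 \<and> ((\<lambda>r. Zterm c n s t X Y r) has_sum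
            (mpoly_eval N P (joinv n X Y) / mpoly_eval N Q (joinv n X Y))) (cone l a))"
  proof -
    define \<delta> :: real where "\<delta> = 1 / (4 * 2 ^ Ct)"
    have p1: "(1::real) \<le> 2 ^ Ct" by simp
    have p2: "(1::real) \<le> 2 * 2 ^ Ct" "(1::real) \<le> 4 * 2 ^ Ct" using p1 by linarith+
    have d0: "\<delta> > 0" "2 * \<delta> \<le> 1" "2 * \<delta> * 2 ^ Ct = 1/2" "\<delta> \<le> 1/4"
      using p1 p2 by (auto simp: \<delta>_def field_simps)
    have "\<forall>(X::nat\<Rightarrow>complex) (Y::nat\<Rightarrow>complex). (\<forall>\<rho><n. dist (X \<rho>) (complex_of_real \<delta>) < \<delta>/2) \<and> (\<forall>\<sigma><s. dist (Y \<sigma>) 1 < \<delta>/2) \<longrightarrow>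
          mpoly_eval N Q (joinv n X Y) \<noteq> 0 \<and> ((\<lambda>r. Zterm c n s t X Y r) has_sum
            (mpoly_eval N P (joinv n X Y) / mpoly_eval N Q (joinv n X Y))) (cone l a)"
    proof (intro allI impI)
      fix X Y :: "nat \<Rightarrow> complex"
      assume H: "(\<forall>\<rho><n. dist (X \<rho>) (complex_of_real \<delta>) < \<delta>/2) \<and> (\<forall>\<sigma><s. dist (Y \<sigma>) 1 < \<delta>/2)"
      have nX: "norm (X \<rho>) \<le> 2 * \<delta> \<and> X \<rho> \<noteq> 0" if "\<rho> < n" for \<rho>
      proof -
        have dd: "norm (X \<rho> - complex_of_real \<delta>) < \<delta>/2" using H that by (simp add: dist_norm)
        have "norm (X \<rho>) \<le> norm (complex_of_real \<delta>) + norm (X \<rho> - complex_of_real \<delta>)"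
          by (rule norm_triangle_sub)
        then have "norm (X \<rho>) \<le> 2 * \<delta>" using dd d0 by simp
        moreover have "X \<rho> \<noteq> 0" using dd d0 by auto
        ultimately show ?thesis by simp
      qed
      have nY: "1/2 \<le> norm (Y \<sigma>) \<and> norm (Y \<sigma>) \<le> 2" if "\<sigma> < s" for \<sigma>
      proof -
        have dd: "norm (Y \<sigma> - 1) < \<delta>/2" using H that by (simp add: dist_norm)
        have "norm (Y \<sigma>) \<le> norm (1::complex) + norm (Y \<sigma> - 1)" by (rule norm_triangle_sub)
        moreover have "norm (1::complex) \<le> norm (Y \<sigma>) + norm (1 - Y \<sigma>)" by (rule norm_triangle_sub)
        moreover have "norm (1 - Y \<sigma>) = norm (Y \<sigma> - 1)" by (rule norm_minus_commute)
        ultimately show ?thesis using dd d0 by auto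
      qed
      have Xnz: "\<forall>\<rho><n. X \<rho> \<noteq> 0" and Ynz: "\<forall>\<sigma><s. Y \<sigma> \<noteq> 0" using nX nY by force+
      have sm: "norm (chT X Y (JJ S) c s (snd (snd d)) (fst d k)) < 1"
        if S: "S \<in> Fc" and d: "d \<in> set (DD S)" and k: "k \<in> JJ S" for S d k
      proof -
        have G: "gens_ok (JJ S) (fst d)" using FPS[OF S] d unfolding FP_def by blast
        have "norm (chT X Y (JJ S) c s (snd (snd d)) (fst d k)) \<le> (2 * \<delta>) * 2 ^ E S d k"
          unfolding E_def
          by (rule chT_upper[OF G k]) (use d0 nX nY JJ(2)[of S] in auto)
        also have "\<dots> \<le> (2 * \<delta>) * 2 ^ Ct" using Eb[OF S d k] d0 by (intro mult_left_mono power_increasing) auto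
        also have "\<dots> < 1" using d0 by simp
        finally show ?thesis .
      qed
      have face: "((\<lambda>r. Zterm c n s t X Y r) has_sum (\<Sum>i<length (DD S). CF X Y (JJ S) c s (DD S ! i))) (Set1 l n S)"
        if S: "S \<in> Fc" for S
      proof (rule reindex_nat)
        have "((\<lambda>z. Zterm c n s t X Y (\<lambda>i. nat (z i))) has_sum (\<Sum>i<length (DD S). CF X Y (JJ S) c s (DD S ! i))) (OS (JJ S) sg)"
          using FPS[OF S] Xnz Ynz JJ(2)[of S] sm[OF S] unfolding FP_def by blast
        then show "((\<lambda>z. Zterm c n s t X Y (\<lambda>i. nat (z i))) has_sum (\<Sum>i<length (DD S). CF X Y (JJ S) c s (DD S ! i)))
            ((\<lambda>r i. int (r i)) ` Set1 l n S)" unfolding Set1_OS[OF S] .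
      qed
      have "((\<lambda>r. Zterm c n s t X Y r) has_sum R X Y) (\<Union>S\<in>Fc. Set1 l n S)"
        unfolding R_def by (rule sum_has_sum[OF finFc face]) (use cone_union(2)[OF n_def] in \<open>auto simp: Fc_def\<close>)
      then have hs: "((\<lambda>r. Zterm c n s t X Y r) has_sum R X Y) (cone l a)"
        unfolding cone_union(1)[OF n_def] Fc_def .
      have "\<forall>S\<in>Fc. \<forall>d\<in>set (DD S). \<forall>k\<in>JJ S. norm (chT X Y (JJ S) c s (snd (snd d)) (fst d k)) \<noteq> 1"
        using sm by fastforce
      then show "mpoly_eval N Q (joinv n X Y) \<noteq> 0 \<and> ((\<lambda>r. Zterm c n s t X Y r) has_sum
            (mpoly_eval N P (joinv n X Y) / mpoly_eval N Q (joinv n X Y))) (cone l a)"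
        using PQval[OF Xnz Ynz] hs by simp
    qed
    then show ?thesis using d0 by (intro exI[of _ "\<lambda>\<rho>. complex_of_real \<delta>"] exI[of _ "\<lambda>\<sigma>. 1"] exI[of _ "\<delta>/2"]) auto
  qed

  have reg2: "\<exists>X0 Y0 \<epsilon>. \<epsilon> > 0 \<and>
       (\<forall>X Y. (\<forall>\<rho><n. dist (X \<rho>) (X0 \<rho>) < \<epsilon> \<and> X \<rho> \<noteq> 0) \<and>
              (\<forall>\<sigma><s. dist (Y \<sigma>) (Y0 \<sigma>) < \<epsilon> \<and> Y \<sigma> \<noteq> 0) \<longrightarrow>
          mpoly_eval N Q (joinv n X Y) \<noteq> 0 \<and>
          ((\<lambda>r. Zterm c n s t (\<lambda>\<rho>. inverse (X \<rho>)) (\<lambda>\<sigma>. inverse (Y \<sigma>)) r) has_sum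
             ((-1) ^ (n - 1) * (mpoly_eval N P (joinv n X Y) / mpoly_eval N Q (joinv n X Y)))) (cone_circ l a))"
  proof -
    define K :: real where "K = 4 * 2 ^ Ct"
    have p1: "(1::real) \<le> 2 ^ Ct" by simp
    have K0: "K \<ge> 4" "K / 2 * (1/2) ^ Ct = 2" using p1 by (auto simp: K_def field_simps power_divide)
    have "\<forall>(X::nat\<Rightarrow>complex) (Y::nat\<Rightarrow>complex). (\<forall>\<rho><n. dist (X \<rho>) (complex_of_real K) < 1/2 \<and> X \<rho> \<noteq> 0) \<and>
              (\<forall>\<sigma><s. dist (Y \<sigma>) 1 < 1/2 \<and> Y \<sigma> \<noteq> 0) \<longrightarrow>
          mpoly_eval N Q (joinv n X Y) \<noteq> 0 \<and>
          ((\<lambda>r. Zterm c n s t (\<lambda>\<rho>. inverse (X \<rho>)) (\<lambda>\<sigma>. inverse (Y \<sigma>)) r) has_sum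
             ((-1) ^ (n - 1) * (mpoly_eval N P (joinv n X Y) / mpoly_eval N Q (joinv n X Y)))) (cone_circ l a)"
    proof (intro allI impI)
      fix X Y :: "nat \<Rightarrow> complex"
      assume H: "(\<forall>\<rho><n. dist (X \<rho>) (complex_of_real K) < 1/2 \<and> X \<rho> \<noteq> 0) \<and> (\<forall>\<sigma><s. dist (Y \<sigma>) 1 < 1/2 \<and> Y \<sigma> \<noteq> 0)"
      have Xnz: "\<forall>\<rho><n. X \<rho> \<noteq> 0" and Ynz: "\<forall>\<sigma><s. Y \<sigma> \<noteq> 0" using H by auto
      have nX: "norm (X \<rho>) \<ge> K / 2" if "\<rho> < n" for \<rho>
      proof -
        have dd: "norm (X \<rho> - complex_of_real K) < 1/2" using H that by (simp add: dist_norm)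
        have "norm (complex_of_real K) \<le> norm (X \<rho>) + norm (complex_of_real K - X \<rho>)" by (rule norm_triangle_sub)
        moreover have "norm (complex_of_real K - X \<rho>) = norm (X \<rho> - complex_of_real K)" by (rule norm_minus_commute)
        ultimately show ?thesis using dd K0 by auto
      qed
      have nY: "1/2 \<le> norm (Y \<sigma>) \<and> norm (Y \<sigma>) \<le> 2" if "\<sigma> < s" for \<sigma>
      proof -
        have dd: "norm (Y \<sigma> - 1) < 1/2" using H that by (simp add: dist_norm)
        have "norm (Y \<sigma>) \<le> norm (1::complex) + norm (Y \<sigma> - 1)" by (rule norm_triangle_sub)
        moreover have "norm (1::complex) \<le> norm (Y \<sigma>) + norm (1 - Y \<sigma>)" by (rule norm_triangle_sub)
        moreover have "norm (1 - Y \<sigma>) = norm (Y \<sigma> - 1)" by (rule norm_minus_commute)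
        ultimately show ?thesis using dd by auto
      qed
      have bg: "norm (chT X Y (JJ S) c s (snd (snd d)) (fst d k)) > 1"
        if S: "S \<in> Fc" and d: "d \<in> set (DD S)" and k: "k \<in> JJ S" for S d k
      proof -
        have G: "gens_ok (JJ S) (fst d)" using FPS[OF S] d unfolding FP_def by blast
        have "1 < K / 2 * (1/2) ^ Ct" using K0 by simp
        also have "\<dots> \<le> K / 2 * (1/2) ^ E S d k"
          using Eb[OF S d k] K0 by (intro mult_left_mono power_decreasing) auto
        also have "\<dots> \<le> norm (chT X Y (JJ S) c s (snd (snd d)) (fst d k))"
          unfolding E_def
          by (rule chT_lower[OF G k]) (use K0 nX nY JJ(2)[of S] in auto)
        finally show ?thesis .
      qed
      have face: "((\<lambda>r. Zterm c n s t (\<lambda>\<rho>. inverse (X \<rho>)) (\<lambda>\<sigma>. inverse (Y \<sigma>)) r) has_sum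
          ((-1)^card (JJ S) * (\<Sum>i<length (DD S). CF X Y (JJ S) c s (DD S ! i)))) (Set2 l n S)"
        if S: "S \<in> Fc" for S
      proof (rule reindex_nat)
        have "\<forall>\<rho>\<in>JJ S. X \<rho> \<noteq> 0" using Xnz JJ(2)[of S] by auto
        then have "((\<lambda>z. Zterm c n s t (\<lambda>\<rho>. inverse (X \<rho>)) (\<lambda>\<sigma>. inverse (Y \<sigma>)) (\<lambda>i. nat (z i))) has_sum
               ((-1)^card (JJ S) * (\<Sum>i<length (DD S). CF X Y (JJ S) c s (DD S ! i)))) (OS (JJ S) (\<lambda>k. \<not> sg k))"
          using FPS[OF S] Ynz bg[OF S] unfolding FP_def by blast
        then show "((\<lambda>z. Zterm c n s t (\<lambda>\<rho>. inverse (X \<rho>)) (\<lambda>\<sigma>. inverse (Y \<sigma>)) (\<lambda>i. nat (z i))) has_sum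
               ((-1)^card (JJ S) * (\<Sum>i<length (DD S). CF X Y (JJ S) c s (DD S ! i))))
            ((\<lambda>r i. int (r i)) ` Set2 l n S)" unfolding Set2_OS[OF S] .
      qed
      have hs0: "((\<lambda>r. Zterm c n s t (\<lambda>\<rho>. inverse (X \<rho>)) (\<lambda>\<sigma>. inverse (Y \<sigma>)) r) has_sum
          (\<Sum>S\<in>Fc. (-1) ^ (card S + 1) * ((-1)^card (JJ S) * (\<Sum>i<length (DD S). CF X Y (JJ S) c s (DD S ! i)))))
          (cone_circ l a)"
        unfolding Fc_def by (rule circ_incl_excl[OF n_def]) (use face in \<open>auto simp: Fc_def\<close>)
      have sgn: "(-1::complex) ^ (card S + 1) * (-1)^card (JJ S) = (-1) ^ (n - 1)" if S: "S \<in> Fc" for S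
      proof -
        have fS: "finite S" "S \<subseteq> {..<n}" using Fc_sub[OF S] by (auto intro: finite_subset)
        have cS: "card S \<le> n" using card_mono[OF _ fS(2)] by simp
        have "card (JJ S) = n - card S" unfolding JJ_def using fS by (simp add: card_Diff_subset)
        then have "(-1::complex) ^ (card S + 1) * (-1)^card (JJ S) = (-1) ^ (card S + 1 + (n - card S))"
          by (simp add: power_add)
        also have "card S + 1 + (n - card S) = (n - 1) + 2" using cS n1 by simp
        also have "(-1::complex) ^ ((n - 1) + 2) = (-1) ^ (n - 1)" by (simp add: power_add)
        finally show ?thesis .
      qed
      have "(\<Sum>S\<in>Fc. (-1) ^ (card S + 1) * ((-1)^card (JJ S) * (\<Sum>i<length (DD S). CF X Y (JJ S) c s (DD S ! i)))) =
          (\<Sum>S\<in>Fc. (-1) ^ (n - 1) * (\<Sum>i<length (DD S). CF X Y (JJ S) c s (DD S ! i)))"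
      proof (rule sum.cong[OF refl])
        fix S assume S: "S \<in> Fc"
        show "(-1) ^ (card S + 1) * ((-1)^card (JJ S) * (\<Sum>i<length (DD S). CF X Y (JJ S) c s (DD S ! i))) =
          (-1) ^ (n - 1) * (\<Sum>i<length (DD S). CF X Y (JJ S) c s (DD S ! i))"
          by (simp only: mult.assoc[symmetric] sgn[OF S])
      qed
      also have "\<dots> = (-1) ^ (n - 1) * R X Y" unfolding R_def by (simp add: sum_distrib_left)
      finally have hs: "((\<lambda>r. Zterm c n s t (\<lambda>\<rho>. inverse (X \<rho>)) (\<lambda>\<sigma>. inverse (Y \<sigma>)) r) has_sum
          ((-1) ^ (n - 1) * R X Y)) (cone_circ l a)" using hs0 by simp
      have "\<forall>S\<in>Fc. \<forall>d\<in>set (DD S). \<forall>k\<in>JJ S. norm (chT X Y (JJ S) c s (snd (snd d)) (fst d k)) \<noteq> 1"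
        using bg by fastforce
      then show "mpoly_eval N Q (joinv n X Y) \<noteq> 0 \<and>
          ((\<lambda>r. Zterm c n s t (\<lambda>\<rho>. inverse (X \<rho>)) (\<lambda>\<sigma>. inverse (Y \<sigma>)) r) has_sum
             ((-1) ^ (n - 1) * (mpoly_eval N P (joinv n X Y) / mpoly_eval N Q (joinv n X Y)))) (cone_circ l a)"
        using PQval[OF Xnz Ynz] hs by simp
    qed
    then show ?thesis by (intro exI[of _ "\<lambda>\<rho>. complex_of_real K"] exI[of _ "\<lambda>\<sigma>. 1"] exI[of _ "1/2"]) auto
  qed
  show ?thesis
    unfolding n_def[symmetric] N_def[symmetric] using P(1) Q(1) reg1 reg2 by blast
qed


end
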